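(* Let $k=2\kappa+1$ with $\kappa\in\{0,1,2,\dots\}$ and let $v\in C_p^{k+2}$. Then there exists a constant $C>0$, independent of $h$, such that for every $N\ge1$ (with $h=1/N$) $$\max_{1\le i\le N}\big|(\pi_1v-v,\ell_i)_{I_i}\big|\le C\,h^{k+3}\,\|v^{(k+2)}\|_\infty,\qquad I_i=(x_{i-1},x_i).$$
   Context: $C_p$ is the space of continuous $1$-periodic real functions, and $C_p^m$ the set of $f\in C_p$ with $f^{(j)}\in C_p$ for $j=1,\dots,m$; $\|\cdot\|_\infty$ is the sup norm. For $N\ge1$, $h=1/N$, $x_i=ih$. $\mathcal{V}_h^k=\{\phi\in C_p:\ \phi|_{[x_{i-1},x_i]}\text{ is a polynomial of degree}\le k,\ i=1,\dots,N\}$. Let $\mathcal{S}_h^2=\{\phi\in\mathcal{V}_h^k:\phi(x_i)=0\ \text{for all } i\}$, $\mathcal{S}_h^1$ its $L^2(0,1)$-orthogonal complement in $\mathcal{V}_h^k$, and $\pi_1$ the $L^2(0,1)$-orthogonal projection onto $\mathcal{S}_h^1$. $(f,g)_{I_i}=\int_{x_{i-1}}^{x_i}fg\,dx$. Let $\psi(x)=\frac{1}{k!}\frac{1}{x(1-x)}\frac{d^{k-1}}{dx^{k-1}}[x^{k+1}(1-x)^k]$ (a polynomial of degree $k$). For $i=1,\dots,N$, $\ell_i$ is the $1$-periodic function which on one period equals $\psi((x-x_{i-1})/h)$ on $[x_{i-1},x_i]$, $\psi((x_{i+1}-x)/h)$ on $[x_i,x_{i+1}]$, and $0$ elsewhere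 (node indices modulo $N$). *)

theory Defs
  imports "HOL-Analysis.Analysis" "HOL-Computational_Algebra.Polynomial"
begin

definition node :: "nat \<Rightarrow> int \<Rightarrow> real" where
  "node N i = real_of_int i / real N"

definition Cp :: "nat \<Rightarrow> (real \<Rightarrow> real) \<Rightarrow> bool" where
  "Cp m f \<longleftrightarrow> (\<forall>x. f (x + 1) = f x) \<and> continuous_on UNIV f \<and>
     (\<forall>j<m. \<forall>x. ((deriv ^^ j) f has_real_derivative (deriv ^^ Suc j) f x) (at x)) \<and>
     continuous_on UNIV ((deriv ^^ m) f)"

definition Vh :: "nat \<Rightarrow> nat \<Rightarrow> (real \<Rightarrow> real) set" where
  "Vh N k = {\<phi>. (\<forall>x. \<phi> (x + 1) = \<phi> x) \<and> continuous_on UNIV \<phi> \<and>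
     (\<forall>i\<in>{1..N}. \<exists>p::real poly. degree p \<le> k \<and>
        (\<forall>x\<in>{node N (int i - 1)..node N (int i)}. \<phi> x = poly p x))}"

definition Sh2 :: "nat \<Rightarrow> nat \<Rightarrow> (real \<Rightarrow> real) set" where
  "Sh2 N k = {\<phi>\<in>Vh N k. \<forall>i. \<phi> (node N i) = 0}"

definition Sh1 :: "nat \<Rightarrow> nat \<Rightarrow> (real \<Rightarrow> real) set" where
  "Sh1 N k = {\<phi>\<in>Vh N k. \<forall>g\<in>Sh2 N k. integral {0..1} (\<lambda>x. \<phi> x * g x) = 0}"

definition pi1 :: "nat \<Rightarrow> nat \<Rightarrow> (real \<Rightarrow> real) \<Rightarrow> (real \<Rightarrow> real)" where
  "pi1 N k v = (THE w. w \<in> Sh1 N k \<and>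
     (\<forall>\<phi>\<in>Sh1 N k. integral {0..1} (\<lambda>x. (v x - w x) * \<phi> x) = 0))"

text \<open>psi(x) = 1/k! * 1/(x(1-x)) * d^(k-1)/dx^(k-1) [x^(k+1) (1-x)^k] (exact polynomial division).\<close>
definition psi_poly :: "nat \<Rightarrow> real poly" where
  "psi_poly k = smult (1 / fact k)
     (((pderiv ^^ (k - 1)) ([:0, 1:] ^ (k + 1) * [:1, -1:] ^ k)) div [:0, 1, -1:])"

definition psi :: "nat \<Rightarrow> real \<Rightarrow> real" where
  "psi k x = poly (psi_poly k) x"

definition ell :: "nat \<Rightarrow> nat \<Rightarrow> nat \<Rightarrow> real \<Rightarrow> real" where
  "ell N k i x = (let h = 1 / real N; t = frac (x - node N (int i - 1)) in
     if t \<le> h then psi k (t / h)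
     else if t \<le> 2 * h then psi k ((2 * h - t) / h)
     else 0)"

definition supnorm :: "(real \<Rightarrow> real) \<Rightarrow> real" where
  "supnorm f = (SUP x. \<bar>f x\<bar>)"

end

theory Submission
  imports Defs
begin


lemma pderiv_iter_Suc: "(pderiv ^^ Suc i) p = pderiv ((pderiv ^^ i) p)"
  by simp

lemma pderiv_pow_factor:
  fixes R X :: "real poly"
  assumes "i \<le> n" and dX: "pderiv X = 1" and Xc: "poly X c = 0"
  shows "\<exists>R'. (pderiv ^^ i) (X^n * R) = X^(n-i) * R' \<and>
              poly R' c = (fact n / fact (n-i)) * poly R c"
  using assms(1)
proof (induction i)
  case 0 show ?case by (rule exI[of _ R]) simp
next
  case (Suc i)
  then obtain R' where R': "(pderiv ^^ i) (X^n * R) = X^(n-i) * R'"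
      "poly R' c = (fact n / fact (n-i)) * poly R c" by auto
  obtain m where m: "n - i = Suc m" using Suc.prems by (metis Suc_diff_le Suc_le_lessD diff_Suc_Suc zero_less_Suc less_imp_Suc_add add_Suc_right)
  have nm: "n - Suc i = m" using m by simp
  define R'' where "R'' = smult (of_nat (Suc m)) R' + X * pderiv R'"
  have "(pderiv ^^ Suc i) (X^n * R) = pderiv (X^Suc m * R')"
    using R' m by simp
  also have "\<dots> = X^m * R''"
    by (simp only: pderiv_mult pderiv_power_Suc dX R''_def) (simp add: algebra_simps)
  finally have e: "(pderiv ^^ Suc i) (X^n * R) = X^(n - Suc i) * R''" using nm by simp
  have "poly R'' c = (Suc m) * poly R' c" by (simp add: R''_def Xc)
  also have "\<dots> = (Suc m) * (fact n / fact (Suc m)) * poly R c" using R' m by simp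
  also have "\<dots> = (fact n / fact m) * poly R c"
  proof -
    have "real (Suc m) * (fact n / fact (Suc m)) = fact n / fact m"
      by (simp only: fact_Suc of_nat_mult) (simp add: field_simps del: of_nat_Suc)
    then show ?thesis by simp
  qed
  finally show ?case using e nm by auto
qed

lemma pderiv_pow_root:
  fixes R X :: "real poly"
  assumes "i < n" and dX: "pderiv X = 1" and Xc: "poly X c = 0"
  shows "poly ((pderiv ^^ i) (X^n * R)) c = 0"
proof -
  obtain R' where R': "(pderiv ^^ i) (X^n * R) = X^(n-i) * R'"
    using pderiv_pow_factor[of i n X c R] assms by auto
  have "n - i > 0" using assms by simp
  then show ?thesis using R' Xc by (simp add: zero_power)
qed

lemma pderiv_pow_root_n:
  fixes R X :: "real poly"
  assumes dX: "pderiv X = 1" and Xc: "poly X c = 0"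
  shows "poly ((pderiv ^^ n) (X^n * R)) c = fact n * poly R c"
proof -
  obtain R' where R': "(pderiv ^^ n) (X^n * R) = X^(n-n) * R'"
      "poly R' c = (fact n / fact (n-n)) * poly R c"
    using pderiv_pow_factor[of n n X c R] assms by auto
  then show ?thesis by simp
qed

definition HH :: "nat \<Rightarrow> real poly" where
  "HH k = [:0, 1:] ^ (k + 1) * [:1, -1:] ^ k"

definition FF :: "nat \<Rightarrow> real poly" where
  "FF k = (pderiv ^^ (k - 1)) (HH k)"

definition X1 :: "real poly" where "X1 = [:0, 1, -1:]"

lemma dX0: "pderiv [:0,1::real:] = 1" by (simp add: pderiv_pCons)
lemma dX1: "pderiv [:-1,1::real:] = 1" by (simp add: pderiv_pCons)

lemma HH_at0: "i < k + 1 \<Longrightarrow> poly ((pderiv ^^ i) (HH k)) 0 = 0"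
  unfolding HH_def by (rule pderiv_pow_root) (auto simp: dX0)

lemma HH_alt: "HH k = [:-1,1:]^k * smult ((-1)^k) ([:0,1:]^(k+1))"
proof -
  have e: "[:1,-1:] = smult (-1) [:-1,1::real:]" by simp
  have "[:1,-1:]^k = smult ((-1)^k) ([:-1,1::real:]^k)" by (simp only: e smult_power)
  then show ?thesis unfolding HH_def by (metis mult.commute mult_smult_left mult_smult_right)
qed

lemma HH_at1: "i < k \<Longrightarrow> poly ((pderiv ^^ i) (HH k)) 1 = 0"
  unfolding HH_alt by (rule pderiv_pow_root) (auto simp: dX1)

lemma HH_at1_k: "poly ((pderiv ^^ k) (HH k)) 1 \<noteq> 0"
  unfolding HH_alt by (subst pderiv_pow_root_n) (auto simp: dX1)

lemma poly_integrable: "(\<lambda>x. poly p x) integrable_on {a..b::real}"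
  by (intro integrable_continuous_interval continuous_intros)

lemma poly_has_integral_pderiv:
  "((\<lambda>x. poly (pderiv p) x) has_integral (poly p 1 - poly p 0)) {0..1::real}"
proof -
  have "((\<lambda>x. poly p x) has_vector_derivative poly (pderiv p) x) (at x within {0..1})" for x
    using poly_DERIV[of p x] by (simp add: has_real_derivative_iff_has_vector_derivative has_vector_derivative_at_within)
  then show ?thesis by (intro fundamental_theorem_of_calculus) auto
qed

lemma ibp:
  fixes A B :: "real poly"
  shows "integral {0..1} (\<lambda>x. poly (pderiv A) x * poly B x) =
     poly A 1 * poly B 1 - poly A 0 * poly B 0 - integral {0..1} (\<lambda>x. poly A x * poly (pderiv B) x)"
proof -
  have "integral {0..1} (\<lambda>x. poly (pderiv (A*B)) x) = poly A 1 * poly B 1 - poly A 0 * poly B 0"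
    using poly_has_integral_pderiv[of "A*B"] by (simp add: integral_unique)
  moreover have "integral {0..1} (\<lambda>x. poly (pderiv (A*B)) x) =
     integral {0..1} (\<lambda>x. poly A x * poly (pderiv B) x) + integral {0..1} (\<lambda>x. poly (pderiv A) x * poly B x)"
    using poly_integrable[of "A * pderiv B" 0 1] poly_integrable[of "B * pderiv A" 0 1]
    by (simp add: pderiv_mult integral_add[symmetric] mult.commute)
  ultimately show ?thesis by simp
qed

lemma ibp_iter:
  fixes H q :: "real poly"
  assumes "\<forall>i<j. poly ((pderiv ^^ i) H) 0 = 0 \<and> poly ((pderiv ^^ i) H) 1 = 0"
  shows "integral {0..1} (\<lambda>x. poly ((pderiv ^^ j) H) x * poly q x) =
     (-1)^j * integral {0..1} (\<lambda>x. poly H x * poly ((pderiv ^^ j) q) x)"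
  using assms
proof (induction j arbitrary: q)
  case 0 then show ?case by simp
next
  case (Suc j)
  have "integral {0..1} (\<lambda>x. poly ((pderiv ^^ Suc j) H) x * poly q x)
     = - integral {0..1} (\<lambda>x. poly ((pderiv ^^ j) H) x * poly (pderiv q) x)"
    using ibp[of "(pderiv ^^ j) H" q] Suc.prems by simp
  also have "\<dots> = - ((-1)^j * integral {0..1} (\<lambda>x. poly H x * poly ((pderiv ^^ j) (pderiv q)) x))"
    using Suc.IH[of "pderiv q"] Suc.prems by simp
  also have "(pderiv ^^ j) (pderiv q) = (pderiv ^^ Suc j) q" by (simp only: funpow_Suc_right o_def)
  finally show ?case by simp
qed

lemma pderiv_iter_zero: "degree (p::real poly) < j \<Longrightarrow> (pderiv ^^ j) p = 0"
proof (induction j arbitrary: p)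
  case 0 then show ?case by simp
next
  case (Suc j)
  show ?case
  proof (cases j)
    case 0 then show ?thesis using Suc.prems by (simp add: pderiv_eq_0_iff)
  next
    case (Suc j')
    have "degree (pderiv p) < j" using Suc.prems Suc by (simp add: degree_pderiv)
    then have "(pderiv ^^ j) (pderiv p) = 0" by (rule Suc.IH)
    then show ?thesis by (simp add: funpow_Suc_right del: funpow.simps)
  qed
qed

lemma FF_orth:
  assumes "k \<ge> 1" "degree r < k - 1"
  shows "integral {0..1} (\<lambda>x. poly (FF k) x * poly r x) = 0"
proof -
  have "\<forall>i<k-1. poly ((pderiv ^^ i) (HH k)) 0 = 0 \<and> poly ((pderiv ^^ i) (HH k)) 1 = 0"
    using HH_at0 HH_at1 by auto
  from ibp_iter[OF this, of r] show ?thesis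
    using pderiv_iter_zero[OF assms(2)] by (simp add: FF_def)
qed


lemma FF_dvd: assumes "k \<ge> 1" shows "X1 dvd FF k"
proof -
  have f0: "poly (FF k) 0 = 0" unfolding FF_def using HH_at0[of "k-1" k] by simp
  have f1: "poly (FF k) 1 = 0" unfolding FF_def using HH_at1[of "k-1" k] assms by simp
  from f0 obtain q1 where q1: "FF k = [:-0,1:] * q1" using poly_eq_0_iff_dvd[of "FF k" 0] by (auto elim: dvdE)
  have "poly q1 1 = 0" using f1 q1 by simp
  then obtain q2 where q2: "q1 = [:-1,1:] * q2" using poly_eq_0_iff_dvd[of q1 1] by (auto elim: dvdE)
  have "FF k = X1 * (- q2)" using q1 q2 by (simp add: X1_def algebra_simps)
  then show ?thesis by (rule dvdI)
qed

definition GG :: "nat \<Rightarrow> real poly" where "GG k = FF k div X1"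

lemma FF_GG: "k \<ge> 1 \<Longrightarrow> FF k = X1 * GG k"
  unfolding GG_def using FF_dvd by simp

lemma psi_poly_GG: "psi_poly k = smult (1 / fact k) (GG k)"
  unfolding psi_poly_def GG_def FF_def HH_def X1_def by simp

lemma pderiv_FF: "k \<ge> 1 \<Longrightarrow> pderiv (FF k) = (pderiv ^^ k) (HH k)"
proof -
  assume "k \<ge> 1"
  then obtain j where "k = Suc j" by (cases k) auto
  then show ?thesis unfolding FF_def by simp
qed

lemma dX1p: "pderiv X1 = [:1, -2:]" by (simp add: X1_def pderiv_pCons)
lemma X1_poly: "poly X1 x = x - x^2" by (simp add: X1_def power2_eq_square algebra_simps)

lemma pFF: "k \<ge> 1 \<Longrightarrow> poly (pderiv (FF k)) x = poly X1 x * poly (pderiv (GG k)) x + poly (GG k) x * (1 - 2 * x)"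
  by (simp only: FF_GG pderiv_mult dX1p poly_add poly_mult) simp

lemma GG_0: assumes "k \<ge> 1" shows "poly (GG k) 0 = 0"
proof -
  have "poly (pderiv (FF k)) 0 = poly (GG k) 0"
    using pFF[OF assms, of 0] by (simp add: X1_poly)
  moreover have "poly (pderiv (FF k)) 0 = 0" using pderiv_FF[OF assms] HH_at0[of k k] by simp
  ultimately show ?thesis by simp
qed

lemma GG_1: assumes "k \<ge> 1" shows "poly (GG k) 1 \<noteq> 0"
proof -
  have "poly (pderiv (FF k)) 1 = - poly (GG k) 1"
    using pFF[OF assms, of 1] by (simp add: X1_poly)
  moreover have "poly (pderiv (FF k)) 1 \<noteq> 0" using pderiv_FF[OF assms] HH_at1_k[of k] by simp
  ultimately show ?thesis by simp
qed

lemma psi_0: "k \<ge> 1 \<Longrightarrow> psi k 0 = 0"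
  by (simp add: psi_def psi_poly_GG GG_0)

lemma psi_1: "k \<ge> 1 \<Longrightarrow> psi k 1 \<noteq> 0"
  by (simp add: psi_def psi_poly_GG GG_1)

lemma bubble_factor:
  fixes q :: "real poly"
  assumes "poly q 0 = 0" "poly q 1 = 0"
  shows "\<exists>r. q = X1 * r \<and> (r = 0 \<or> degree r + 2 = degree q)"
proof -
  from assms(1) obtain q1 where q1: "q = [:-0,1:] * q1" using poly_eq_0_iff_dvd[of q 0] by (auto elim: dvdE)
  have "poly q1 1 = 0" using assms(2) q1 by simp
  then obtain q2 where q2: "q1 = [:-1,1:] * q2" using poly_eq_0_iff_dvd[of q1 1] by (auto elim: dvdE)
  have e: "q = X1 * (- q2)" using q1 q2 by (simp add: X1_def algebra_simps)
  have "- q2 = 0 \<or> degree (- q2) + 2 = degree q"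
  proof (cases "q2 = 0")
    case False
    have nz: "X1 \<noteq> 0" "- q2 \<noteq> 0" using False by (auto simp: X1_def)
    have "degree q = degree X1 + degree (-q2)" by (simp only: e degree_mult_eq[OF nz])
    then show ?thesis by (simp add: X1_def)
  qed simp
  with e show ?thesis by blast
qed

lemma psi_bubble:
  fixes q :: "real poly"
  assumes k: "k \<ge> 1" and "degree q \<le> k" "poly q 0 = 0" "poly q 1 = 0"
  shows "integral {0..1} (\<lambda>s. poly q s * psi k s) = 0"
proof -
  obtain r where r: "q = X1 * r" "r = 0 \<or> degree r + 2 = degree q"
    using bubble_factor assms(3,4) by blast
  have dr: "degree r < k - 1" if "r \<noteq> 0" using r that assms(2) by linarith
  have "(\<lambda>s. poly q s * psi k s) = (\<lambda>s. (1 / fact k) * (poly (FF k) s * poly r s))"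
    by (rule ext) (simp add: r(1) FF_GG[OF k] psi_def psi_poly_GG)
  then have "integral {0..1} (\<lambda>s. poly q s * psi k s) = (1 / fact k) * integral {0..1} (\<lambda>s. poly (FF k) s * poly r s)"
    by simp
  also have "integral {0..1} (\<lambda>s. poly (FF k) s * poly r s) = 0"
  proof (cases "r = 0")
    case True then show ?thesis by simp
  next
    case False then show ?thesis using FF_orth[OF k dr] by simp
  qed
  finally show ?thesis by simp
qed

lemma reflect01:
  fixes f :: "real \<Rightarrow> real"
  assumes "f integrable_on {0..1}"
  shows "integral {0..1} (\<lambda>s. f (1 - s)) = integral {0..1} f"
proof -
  have i: "(f has_integral integral {0..1} f) (cbox 0 1)" using assms by (simp add: integrable_integral)
  have "((\<lambda>x. f ((-1) *\<^sub>R x + 1)) has_integral (1 / (\<bar>-1\<bar> ^ DIM(real))) *\<^sub>R integral {0..1} f)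
     ((\<lambda>x. (1 / (-1)) *\<^sub>R x + -((1 / (-1)) *\<^sub>R 1)) ` cbox 0 1)"
    by (rule has_integral_affinity[OF i]) simp
  moreover have "(\<lambda>x. (1 / (-1)) *\<^sub>R x + -((1 / (-1)) *\<^sub>R 1)) ` cbox 0 (1::real) = {0..1}"
  proof -
    have "(\<lambda>x::real. 1 - x) ` {0..1} = {0..1}"
      by (auto simp: image_iff intro!: bexI[where x="1 - _"])
    then show ?thesis by simp
  qed
  ultimately have "((\<lambda>x. f (1 - x)) has_integral integral {0..1} f) {0..1}" by simp
  then show ?thesis by (rule integral_unique)
qed

lemma psi_bubble_r:
  fixes q :: "real poly"
  assumes k: "k \<ge> 1" and "degree q \<le> k" "poly q 0 = 0" "poly q 1 = 0"
  shows "integral {0..1} (\<lambda>s. poly q s * psi k (1 - s)) = 0"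
proof -
  define q' where "q' = pcompose q [:1, -1:]"
  have pq: "poly q' s = poly q (1 - s)" for s by (simp add: q'_def poly_pcompose)
  have "degree q' \<le> k" using assms(2) by (simp add: q'_def degree_pcompose)
  moreover have "poly q' 0 = 0" "poly q' 1 = 0" using assms(3,4) pq by auto
  ultimately have z: "integral {0..1} (\<lambda>s. poly q' s * psi k s) = 0" using psi_bubble k by blast
  have "integral {0..1} (\<lambda>s. poly q s * psi k (1 - s)) = integral {0..1} (\<lambda>s. poly q (1 - s) * psi k (1 - (1 - s)))"
    by (rule reflect01[symmetric]) (auto simp: psi_def intro!: integrable_continuous_interval continuous_intros)
  also have "\<dots> = integral {0..1} (\<lambda>s. poly q' s * psi k s)" by (simp add: pq)
  finally show ?thesis using z by simp
qed


lemma degree_pderiv_iter: "degree ((pderiv ^^ j) (p::real poly)) = degree p - j"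
  by (induction j) (simp_all add: degree_pderiv)

lemma degree_HH: "degree (HH k) = 2 * k + 1"
proof -
  have a: "[:0,1::real:] ^ (k+1) \<noteq> 0" "[:1,-1::real:] ^ k \<noteq> 0" by auto
  have "degree (HH k) = degree ([:0,1::real:] ^ (k+1)) + degree ([:1,-1::real:] ^ k)"
    unfolding HH_def by (rule degree_mult_eq[OF a])
  also have "\<dots> = (k+1) + k" by (simp add: degree_power_eq)
  finally show ?thesis by simp
qed

lemma degree_GG: assumes "k \<ge> 1" shows "degree (GG k) = k"
proof -
  have "GG k \<noteq> 0" using GG_1[OF assms] by auto
  moreover have "X1 \<noteq> 0" by (simp add: X1_def)
  ultimately have "degree (FF k) = degree X1 + degree (GG k)"
    using FF_GG[OF assms] degree_mult_eq by metis
  moreover have "degree (FF k) = k + 2" unfolding FF_def degree_pderiv_iter degree_HH using assms by simp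
  moreover have "degree X1 = 2" by (simp add: X1_def)
  ultimately show ?thesis by simp
qed

lemma degree_psi: "k \<ge> 1 \<Longrightarrow> degree (psi_poly k) \<le> k"
  by (simp add: psi_poly_GG degree_GG)

lemma cont_psi: "continuous_on S (psi k)"
  unfolding psi_def by (intro continuous_intros)

lemma cont_psi_r: "continuous_on S (\<lambda>s. psi k (1 - s))"
  unfolding psi_def by (intro continuous_intros)

lemma cont_psi_comp[continuous_intros]: "continuous_on S g \<Longrightarrow> continuous_on S (\<lambda>x. psi k (g x))"
  unfolding psi_def by (intro continuous_intros)

lemma int_pos01:
  fixes f :: "real \<Rightarrow> real"
  assumes "continuous_on {0..1} f" "\<And>x. x \<in> {0..1} \<Longrightarrow> f x \<ge> 0" "f 0 \<noteq> 0"
  shows "integral {0..1} f > 0"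
proof -
  have i: "f integrable_on {0..1}" using assms(1) by (rule integrable_continuous_interval)
  have "integral {0..1} f \<ge> 0" using integral_nonneg[OF i] assms(2) by auto
  moreover have "integral {0..1} f \<noteq> 0"
  proof
    assume "integral {0..1} f = 0"
    then have "(f has_integral 0) (cbox 0 1)" using i by (metis box_real(2) integrable_integral)
    then have "f 0 = 0" using has_integral_0_cbox_imp_0[of 0 1 f 0] assms(1,2) by (auto simp: box_real)
    then show False using assms(3) by simp
  qed
  ultimately show ?thesis by simp
qed

definition pa :: "nat \<Rightarrow> real" where "pa k = integral {0..1} (\<lambda>s. psi k s * psi k s)"
definition pb :: "nat \<Rightarrow> real" where "pb k = integral {0..1} (\<lambda>s. psi k s * psi k (1 - s))"

lemma pa_pb: assumes k: "k \<ge> 1" shows "\<bar>pb k\<bar> < pa k"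
proof -
  have c: "continuous_on {0..1} (\<lambda>s. psi k s * psi k s)" "continuous_on {0..1} (\<lambda>s. psi k (1-s) * psi k (1-s))"
          "continuous_on {0..1} (\<lambda>s. psi k s * psi k (1-s))"
    unfolding psi_def by (intro continuous_intros)+
  note ii = c[THEN integrable_continuous_interval]
  have r: "integral {0..1} (\<lambda>s. psi k (1-s) * psi k (1-s)) = pa k"
    unfolding pa_def using reflect01[OF ii(1)] by simp
  have p1: "integral {0..1} (\<lambda>s. (psi k s - psi k (1-s))^2) > 0"
    by (rule int_pos01) (auto simp: psi_0[OF k] psi_1[OF k] intro!: continuous_intros)
  have p2: "integral {0..1} (\<lambda>s. (psi k s + psi k (1-s))^2) > 0"
    by (rule int_pos01) (auto simp: psi_0[OF k] psi_1[OF k] intro!: continuous_intros)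
  have e1: "integral {0..1} (\<lambda>s. (psi k s - psi k (1-s))^2) = 2 * pa k - 2 * pb k"
  proof -
    have "(\<lambda>s. (psi k s - psi k (1-s))^2) = (\<lambda>s. (psi k s * psi k s + psi k (1-s) * psi k (1-s)) - 2 * (psi k s * psi k (1-s)))"
      by (rule ext) (simp add: power2_eq_square algebra_simps)
    then show ?thesis using ii r
      by (simp add: integral_diff integral_add integrable_add pa_def pb_def)
  qed
  have e2: "integral {0..1} (\<lambda>s. (psi k s + psi k (1-s))^2) = 2 * pa k + 2 * pb k"
  proof -
    have "(\<lambda>s. (psi k s + psi k (1-s))^2) = (\<lambda>s. (psi k s * psi k s + psi k (1-s) * psi k (1-s)) + 2 * (psi k s * psi k (1-s)))"
      by (rule ext) (simp add: power2_eq_square algebra_simps)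
    then show ?thesis using ii r
      by (simp add: integral_add integrable_add pa_def pb_def)
  qed
  show ?thesis using p1 p2 e1 e2 by linarith
qed

lemma integral_add_cmul:
  fixes f g :: "real \<Rightarrow> real"
  assumes "f integrable_on S" "g integrable_on S"
  shows "integral S (\<lambda>x. f x + c * g x) = integral S f + c * integral S g"
proof -
  have "(\<lambda>x. c * g x) integrable_on S" using integrable_on_cmult_left[OF assms(2), of c] by simp
  then show ?thesis using assms by (simp add: integral_add)
qed

definition Lam :: "nat \<Rightarrow> (real \<Rightarrow> real) \<Rightarrow> real" where
  "Lam k f = integral {0..1} (\<lambda>s. (f s - (f 1 * psi k s + f 0 * psi k (1-s)) / psi k 1) * psi k s)"

definition Lamr :: "nat \<Rightarrow> (real \<Rightarrow> real) \<Rightarrow> real" where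
  "Lamr k f = integral {0..1} (\<lambda>s. (f s - (f 1 * psi k s + f 0 * psi k (1-s)) / psi k 1) * psi k (1-s))"

lemma Lam_poly:
  assumes k: "k \<ge> 1" and d: "degree p \<le> k"
  shows "Lam k (poly p) = 0" "Lamr k (poly p) = 0"
proof -
  define q where "q = p - smult (poly p 1 / psi k 1) (psi_poly k) - smult (poly p 0 / psi k 1) (pcompose (psi_poly k) [:1,-1:])"
  have pq: "poly q s = poly p s - (poly p 1 * psi k s + poly p 0 * psi k (1-s)) / psi k 1" for s
    by (simp add: q_def psi_def poly_pcompose add_divide_distrib)
  have dq: "degree q \<le> k" unfolding q_def
    using d degree_psi[OF k]
    by (intro degree_diff_le) (auto simp: degree_pcompose)
  have q0: "poly q 0 = 0" "poly q 1 = 0" using psi_0[OF k] psi_1[OF k] by (auto simp: pq)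
  show "Lam k (poly p) = 0" unfolding Lam_def using psi_bubble[OF k dq q0] by (simp add: pq)
  show "Lamr k (poly p) = 0" unfolding Lamr_def using psi_bubble_r[OF k dq q0] by (simp add: pq)
qed

lemma Lam_lin:
  assumes k: "k \<ge> 1" and "continuous_on {0..1} f" "continuous_on {0..1} g"
  shows "Lam k (\<lambda>s. f s + c * g s) = Lam k f + c * Lam k g"
        "Lamr k (\<lambda>s. f s + c * g s) = Lamr k f + c * Lamr k g"
proof -
  let ?F = "\<lambda>s. (f s - (f 1 * psi k s + f 0 * psi k (1-s)) / psi k 1)"
  let ?G = "\<lambda>s. (g s - (g 1 * psi k s + g 0 * psi k (1-s)) / psi k 1)"
  have e: "(f s + c * g s - ((f 1 + c * g 1) * psi k s + (f 0 + c * g 0) * psi k (1-s)) / psi k 1) = ?F s + c * ?G s" for s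
    using psi_1[OF k] by (simp add: field_simps)
  have cF: "continuous_on {0..1} ?F" "continuous_on {0..1} ?G" using assms psi_1[OF k]
    by (auto intro!: continuous_intros)
  have i1: "(\<lambda>s. ?F s * psi k s) integrable_on {0..1}" "(\<lambda>s. ?G s * psi k s) integrable_on {0..1}"
     "(\<lambda>s. ?F s * psi k (1-s)) integrable_on {0..1}" "(\<lambda>s. ?G s * psi k (1-s)) integrable_on {0..1}"
    using cF by (auto intro!: integrable_continuous_interval continuous_intros)
  have "Lam k (\<lambda>s. f s + c * g s) = integral {0..1} (\<lambda>s. ?F s * psi k s + c * (?G s * psi k s))"
    unfolding Lam_def e by (simp add: algebra_simps)
  also have "\<dots> = Lam k f + c * Lam k g" unfolding Lam_def
    using i1 by (simp add: integral_add_cmul)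
  finally show "Lam k (\<lambda>s. f s + c * g s) = Lam k f + c * Lam k g" .
  have "Lamr k (\<lambda>s. f s + c * g s) = integral {0..1} (\<lambda>s. ?F s * psi k (1-s) + c * (?G s * psi k (1-s)))"
    unfolding Lamr_def e by (simp add: algebra_simps)
  also have "\<dots> = Lamr k f + c * Lamr k g" unfolding Lamr_def
    using i1 by (simp add: integral_add_cmul)
  finally show "Lamr k (\<lambda>s. f s + c * g s) = Lamr k f + c * Lamr k g" .
qed

lemma Lamr_reflect:
  assumes k: "k \<ge> 1" and "continuous_on {0..1} f"
  shows "Lamr k f = Lam k (\<lambda>s. f (1 - s))"
proof -
  let ?H = "\<lambda>s. (f s - (f 1 * psi k s + f 0 * psi k (1-s)) / psi k 1) * psi k (1-s)"
  have "?H integrable_on {0..1}"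
  proof -
    have "continuous_on {0..1} ?H" using assms psi_1[OF k] by (intro continuous_intros) auto
    then show ?thesis by (rule integrable_continuous_interval)
  qed
  from reflect01[OF this] show ?thesis unfolding Lamr_def Lam_def by (simp add: algebra_simps)
qed

lemma psi_bound: "\<exists>M>0. \<forall>s\<in>{0..1}. \<bar>psi k s\<bar> \<le> M"
proof -
  have "compact ((psi k) ` {0..1})" by (rule compact_continuous_image[OF cont_psi]) simp
  then obtain M where "\<forall>y\<in>(psi k) ` {0..1}. norm y \<le> M" using compact_imp_bounded bounded_iff by metis
  then show ?thesis by (intro exI[of _ "max M 1"]) auto
qed

lemma Lam_bound:
  assumes k: "k \<ge> 1"
  shows "\<exists>CL>0. \<forall>(f::real\<Rightarrow>real) B. continuous_on {0..1} f \<longrightarrow> (\<forall>s\<in>{0..1}. \<bar>f s\<bar> \<le> B) \<longrightarrow>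
            \<bar>Lam k f\<bar> \<le> CL * B \<and> \<bar>Lamr k f\<bar> \<le> CL * B"
proof -
  obtain M where M: "M > 0" "\<forall>s\<in>{0..1}. \<bar>psi k s\<bar> \<le> M" using psi_bound by blast
  define p1 where "p1 = \<bar>psi k 1\<bar>"
  have p1: "p1 > 0" using psi_1[OF k] by (simp add: p1_def)
  define CL where "CL = (1 + 2 * M / p1) * M"
  have CL: "CL > 0" unfolding CL_def using M p1 by (intro mult_pos_pos add_pos_nonneg) auto
  show ?thesis
  proof (intro exI[of _ CL] conjI CL allI impI)
    fix f :: "real \<Rightarrow> real" and B :: real assume cf: "continuous_on {0..1} f" and fB: "\<forall>s\<in>{0..1}. \<bar>f s\<bar> \<le> B"
    have b1: "\<bar>(f s - (f 1 * psi k s + f 0 * psi k (1-s)) / psi k 1)\<bar> \<le> (1 + 2 * M / p1) * B"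
      if s: "s \<in> {0..1}" for s
    proof -
      have "\<bar>f 1 * psi k s\<bar> \<le> B * M" using fB M s by (auto simp: abs_mult intro!: mult_mono)
      moreover have "\<bar>f 0 * psi k (1-s)\<bar> \<le> B * M" using fB M s by (auto simp: abs_mult intro!: mult_mono)
      ultimately have A: "\<bar>f 1 * psi k s + f 0 * psi k (1-s)\<bar> \<le> 2 * B * M"
        using abs_triangle_ineq[of "f 1 * psi k s" "f 0 * psi k (1-s)"] by linarith
      have "\<bar>(f 1 * psi k s + f 0 * psi k (1-s)) / psi k 1\<bar> = \<bar>f 1 * psi k s + f 0 * psi k (1-s)\<bar> / p1"
        by (simp add: abs_divide p1_def)
      also have "\<dots> \<le> 2 * B * M / p1" using A p1 by (intro divide_right_mono) auto
      finally have X: "\<bar>(f 1 * psi k s + f 0 * psi k (1-s)) / psi k 1\<bar> \<le> 2 * B * M / p1" .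
      have fs: "\<bar>f s\<bar> \<le> B" using fB s by auto
      have T: "\<bar>f s - (f 1 * psi k s + f 0 * psi k (1-s)) / psi k 1\<bar> \<le> \<bar>f s\<bar> + \<bar>(f 1 * psi k s + f 0 * psi k (1-s)) / psi k 1\<bar>"
        by (rule abs_triangle_ineq4)
      have "(1 + 2 * M / p1) * B = B + 2 * B * M / p1" by (simp add: algebra_simps)
      then show ?thesis using T X fs by linarith
    qed
    have "B \<ge> 0" using fB by (meson abs_ge_zero atLeastAtMost_iff order.trans zero_le_one order_refl)
    have b2: "\<bar>(f s - (f 1 * psi k s + f 0 * psi k (1-s)) / psi k 1) * w\<bar> \<le> CL * B"
      if s: "s \<in> {0..1}" and w: "\<bar>w\<bar> \<le> M" for s w
    proof -
      have "\<bar>(f s - (f 1 * psi k s + f 0 * psi k (1-s)) / psi k 1) * w\<bar> \<le> ((1 + 2 * M / p1) * B) * M"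
        unfolding abs_mult using b1[OF s] w by (intro mult_mono) auto
      then show ?thesis by (simp add: CL_def algebra_simps)
    qed
    have "norm (integral {0..1} (\<lambda>s. (f s - (f 1 * psi k s + f 0 * psi k (1-s)) / psi k 1) * psi k s)) \<le> CL * B * (1 - 0)"
      by (rule integral_bound) (use b2 M(2) cf psi_1[OF k] in \<open>auto intro!: continuous_intros\<close>)
    then have "\<bar>Lam k f\<bar> \<le> CL * B * (1 - 0)" unfolding Lam_def by simp
    then show "\<bar>Lam k f\<bar> \<le> CL * B" by simp
    have "norm (integral {0..1} (\<lambda>s. (f s - (f 1 * psi k s + f 0 * psi k (1-s)) / psi k 1) * psi k (1-s))) \<le> CL * B * (1 - 0)"
      by (rule integral_bound) (use b2 M(2) cf psi_1[OF k] in \<open>auto intro!: continuous_intros\<close>)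
    then have "\<bar>Lamr k f\<bar> \<le> CL * B * (1 - 0)" unfolding Lamr_def by simp
    then show "\<bar>Lamr k f\<bar> \<le> CL * B" by simp
  qed
qed

lemma Lam_sym:
  assumes k: "k \<ge> 1" and odd: "odd k"
  shows "Lamr k (\<lambda>s. s ^ (k+1)) = Lam k (\<lambda>s. s ^ (k+1))"
proof -
  define d where "d = [:1,-1:]^(k+1) - [:0,1::real:]^(k+1)"
  have pd: "poly d s = (1 - s)^(k+1) - s^(k+1)" for s by (simp add: d_def poly_power algebra_simps)
  have dd: "degree d \<le> k"
  proof -
    have "degree ([:1,-1::real:]^(k+1)) = k+1" "degree ([:0,1::real:]^(k+1)) = k+1"
      by (subst degree_power_eq; simp)+
    moreover have "coeff ([:1,-1::real:]^(k+1)) (k+1) = 1" "coeff ([:0,1::real:]^(k+1)) (k+1) = 1"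
    proof -
      have "lead_coeff ([:1,-1::real:]^(k+1)) = (lead_coeff [:1,-1::real:])^(k+1)" by (rule lead_coeff_power)
      also have "lead_coeff [:1,-1::real:] = -1" by simp
      finally have l: "lead_coeff ([:1,-1::real:]^(k+1)) = (-1)^(k+1)" .
      have "even (k+1)" using odd by simp
      then have "(-1::real)^(k+1) = 1" by simp
      moreover have "degree ([:1,-1::real:]^(k+1)) = k+1" by (subst degree_power_eq; simp)
      ultimately show "coeff ([:1,-1::real:]^(k+1)) (k+1) = 1" using l by metis
      show "coeff ([:0,1::real:]^(k+1)) (k+1) = 1"
        using lead_coeff_power[of "[:0,1::real:]" "k+1"] by (simp add: degree_power_eq)
    qed
    ultimately have "coeff d i = 0" if "i > k" for i
      using that by (cases "i = k+1") (auto simp: d_def coeff_eq_0)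
    then show ?thesis by (intro degree_le) auto
  qed
  have c1: "continuous_on {0..1} (\<lambda>s::real. s ^ (k+1))" by (intro continuous_intros)
  have c2: "continuous_on {0..1} (poly d)" by (intro continuous_intros)
  have "Lamr k (\<lambda>s. s ^ (k+1)) = Lam k (\<lambda>s. (1-s)^(k+1))" using Lamr_reflect[OF k c1] by simp
  also have "(\<lambda>s. (1-s)^(k+1)) = (\<lambda>s. s^(k+1) + 1 * poly d s)" by (rule ext) (simp add: pd)
  also have "Lam k \<dots> = Lam k (\<lambda>s. s^(k+1)) + 1 * Lam k (poly d)" using Lam_lin(1)[OF k c1 c2, of 1] by simp
  also have "Lam k (poly d) = 0" using Lam_poly[OF k dd] by simp
  finally show ?thesis by simp
qed


definition Sfun :: "nat \<Rightarrow> nat \<Rightarrow> (int \<Rightarrow> real) \<Rightarrow> real \<Rightarrow> real" where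
  "Sfun N k c x = (let m = \<lfloor>x * real N\<rfloor> + 1; s = x * real N - of_int \<lfloor>x * real N\<rfloor> in
      c m * psi k s + c (m - 1) * psi k (1 - s))"

lemma Sfun_on:
  assumes k: "k \<ge> 1" and "of_int m - 1 \<le> x * real N" "x * real N \<le> of_int m"
  shows "Sfun N k c x = c m * psi k (x * real N - (of_int m - 1)) + c (m - 1) * psi k (of_int m - x * real N)"
proof (cases "x * real N < of_int m")
  case True
  then have fl: "\<lfloor>x * real N\<rfloor> = m - 1" using assms(2) by (simp add: floor_eq_iff)
  show ?thesis unfolding Sfun_def Let_def fl by (simp add: algebra_simps)
next
  case False
  then have e: "x * real N = of_int m" using assms(3) by simp
  then have "\<lfloor>x * real N\<rfloor> = m" by simp
  then show ?thesis using e psi_0[OF k] by (simp add: Sfun_def Let_def)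
qed

lemma Sfun_local:
  assumes k: "k \<ge> 1" and N: "N \<ge> 1" and s: "s \<in> {0..1}"
  shows "Sfun N k c ((of_int m - 1 + s) / real N) = c m * psi k s + c (m - 1) * psi k (1 - s)"
proof -
  have e: "(of_int m - 1 + s) / real N * real N = of_int m - 1 + s" using N by simp
  have "Sfun N k c ((of_int m - 1 + s) / real N) = c m * psi k ((of_int m - 1 + s) / real N * real N - (of_int m - 1)) + c (m - 1) * psi k (of_int m - (of_int m - 1 + s) / real N * real N)"
    by (rule Sfun_on[OF k]) (use s N in \<open>simp_all add: e\<close>)
  then show ?thesis using N by (simp add: e)
qed

lemma Sfun_node:
  assumes k: "k \<ge> 1" and N: "N \<ge> 1"
  shows "Sfun N k c (node N j) = c j * psi k 1"
proof -
  have "Sfun N k c ((of_int j - 1 + 1) / real N) = c j * psi k 1 + c (j - 1) * psi k (1 - 1)"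
    by (rule Sfun_local[OF k N]) simp
  then show ?thesis using psi_0[OF k] by (simp add: node_def)
qed

definition cper :: "nat \<Rightarrow> (int \<Rightarrow> real) \<Rightarrow> bool" where
  "cper N c \<longleftrightarrow> (\<forall>j. c (j + int N) = c j)"

lemma Sfun_periodic:
  assumes N: "N \<ge> 1" and c: "cper N c"
  shows "Sfun N k c (x + 1) = Sfun N k c x"
proof -
  have e: "(x + 1) * real N = x * real N + of_int (int N)" by (simp add: algebra_simps)
  have f: "\<lfloor>(x + 1) * real N\<rfloor> = \<lfloor>x * real N\<rfloor> + int N" unfolding e by simp
  have c1: "c (\<lfloor>x * real N\<rfloor> + int N + 1) = c (\<lfloor>x * real N\<rfloor> + 1)"
    using c unfolding cper_def by (metis add.commute add.left_commute)
  have c2: "c (\<lfloor>x * real N\<rfloor> + int N + 1 - 1) = c (\<lfloor>x * real N\<rfloor> + 1 - 1)"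
    using c unfolding cper_def by simp
  show ?thesis unfolding Sfun_def Let_def f using c1 c2 e by (simp add: algebra_simps)
qed

definition Pm :: "nat \<Rightarrow> nat \<Rightarrow> (int \<Rightarrow> real) \<Rightarrow> int \<Rightarrow> real \<Rightarrow> real" where
  "Pm N k c m x = c m * psi k (x * real N - (of_int m - 1)) + c (m - 1) * psi k (of_int m - x * real N)"

lemma Pm_cont: "continuous_on S (Pm N k c m)"
  unfolding Pm_def by (intro continuous_intros)

lemma Sfun_cont_on_elem:
  assumes k: "k \<ge> 1" and N: "N \<ge> 1"
  shows "continuous_on {(of_int m - 1) / real N .. of_int m / real N} (Sfun N k c)"
proof -
  have "continuous_on {(of_int m - 1) / real N .. of_int m / real N} (Pm N k c m)" by (rule Pm_cont)
  moreover have "Pm N k c m x = Sfun N k c x" if "x \<in> {(of_int m - 1) / real N .. of_int m / real N}" for x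
  proof -
    from that N have "of_int m - 1 \<le> x * real N" "x * real N \<le> of_int m"
      by (auto simp: field_simps)
    then show ?thesis using Sfun_on[OF k] by (simp add: Pm_def)
  qed
  ultimately show ?thesis using continuous_on_cong by blast
qed

lemma Sfun_cont:
  assumes k: "k \<ge> 1" and N: "N \<ge> 1"
  shows "continuous_on UNIV (Sfun N k c)"
proof -
  have "isCont (Sfun N k c) x" for x
  proof -
    define m where "m = \<lfloor>x * real N\<rfloor> + 1"
    have Np: "real N > 0" using N by simp
    have x1: "(of_int m - 1) / real N \<le> x" "x < of_int m / real N"
      unfolding m_def using Np by (auto simp: field_simps) (linarith)
    have "continuous_on ({(of_int (m - 1) - 1) / real N .. of_int (m-1) / real N} \<union> {(of_int m - 1) / real N .. of_int m / real N}) (Sfun N k c)"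
      by (intro continuous_on_closed_Un Sfun_cont_on_elem[OF k N]) auto
    moreover have "x \<in> interior ({(of_int (m - 1) - 1) / real N .. of_int (m-1) / real N} \<union> {(of_int m - 1) / real N .. of_int m / real N})"
    proof -
      have "{(of_int (m - 1) - 1) / real N <..< of_int m / real N} \<subseteq> {(of_int (m - 1) - 1) / real N .. of_int (m-1) / real N} \<union> {(of_int m - 1) / real N .. of_int m / real N}"
        by auto
      moreover have "x \<in> {(of_int (m - 1) - 1) / real N <..< of_int m / real N}"
        using x1 Np by (auto simp: field_simps)
      ultimately show ?thesis using interior_maximal[OF _ open_greaterThanLessThan] by blast
    qed
    ultimately show ?thesis using continuous_on_interior by blast
  qed
  then show ?thesis by (simp add: continuous_at_imp_continuous_on)
qed

lemma Sfun_Vh: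
  assumes k: "k \<ge> 1" and N: "N \<ge> 1" and c: "cper N c"
  shows "Sfun N k c \<in> Vh N k"
proof -
  have "\<exists>p::real poly. degree p \<le> k \<and> (\<forall>x\<in>{node N (int i - 1)..node N (int i)}. Sfun N k c x = poly p x)"
    if i: "i \<in> {1..N}" for i
  proof -
    let ?m = "int i"
    define p where "p = smult (c ?m) (pcompose (psi_poly k) [:-(of_int ?m - 1), real N:]) +
                        smult (c (?m - 1)) (pcompose (psi_poly k) [:of_int ?m, - real N:])"
    have "degree p \<le> k" unfolding p_def using degree_psi[OF k]
      by (intro degree_add_le) (auto simp: degree_pcompose)
    moreover have "Sfun N k c x = poly p x" if x: "x \<in> {node N (int i - 1)..node N (int i)}" for x
    proof -
      from x N have "of_int ?m - 1 \<le> x * real N" "x * real N \<le> of_int ?m"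
        by (auto simp: node_def field_simps)
      then have "Sfun N k c x = c (int i) * psi k (x * real N - (of_int (int i) - 1)) + c (int i - 1) * psi k (of_int (int i) - x * real N)"
        by (intro Sfun_on[OF k]) auto
      then show ?thesis by (simp add: p_def poly_pcompose psi_def algebra_simps)
    qed
    ultimately show ?thesis by blast
  qed
  then show ?thesis unfolding Vh_def using Sfun_periodic[OF N c] Sfun_cont[OF k N] by auto
qed


definition loc :: "nat \<Rightarrow> int \<Rightarrow> real \<Rightarrow> real" where
  "loc N m s = (of_int m - 1 + s) / real N"

lemma loc_0: "loc N m 0 = node N (m - 1)" by (simp add: loc_def node_def)
lemma loc_1: "loc N m 1 = node N m" by (simp add: loc_def node_def)

lemma Sfun_loc:
  assumes k: "k \<ge> 1" and N: "N \<ge> 1" and s: "s \<in> {0..1}"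
  shows "Sfun N k c (loc N m s) = c m * psi k s + c (m - 1) * psi k (1 - s)"
  unfolding loc_def by (rule Sfun_local[OF k N s])

lemma subst_elem:
  fixes f :: "real \<Rightarrow> real"
  assumes N: "N \<ge> 1" and cf: "continuous_on {node N (m - 1)..node N m} f"
  shows "integral {node N (m - 1)..node N m} f = integral {0..1} (\<lambda>s. f (loc N m s)) / real N"
proof -
  let ?a = "node N (m - 1)" and ?h = "1 / real N"
  have hp: "?h > 0" using N by simp
  have b: "node N m = ?a + ?h" using N by (simp add: node_def field_simps)
  have i: "(f has_integral integral {?a..node N m} f) (cbox ?a (?a + ?h))"
    using integrable_continuous_interval[OF cf] b by (simp add: integrable_integral)
  have "((\<lambda>x. f (?h *\<^sub>R x + ?a)) has_integral (integral {?a..node N m} f /\<^sub>R ?h ^ DIM(real)))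
           (cbox ((?a - ?a) /\<^sub>R ?h) ((?a + ?h - ?a) /\<^sub>R ?h))"
    by (rule has_integral_affinity'[OF i hp])
  then have "((\<lambda>s. f (loc N m s)) has_integral (integral {?a..node N m} f * real N)) {0..1}"
    using N by (simp add: loc_def node_def field_simps)
  then have "integral {0..1} (\<lambda>s. f (loc N m s)) = integral {?a..node N m} f * real N"
    by (rule integral_unique)
  then show ?thesis using N by simp
qed

lemma split_elems:
  fixes f :: "real \<Rightarrow> real"
  assumes N: "N \<ge> 1" and cf: "continuous_on {0..1} f"
  shows "integral {0..1} f = (\<Sum>m=1..N. integral {node N (int m - 1)..node N (int m)} f)"
proof -
  have "n \<le> N \<Longrightarrow> integral {0..node N (int n)} f = (\<Sum>m=1..n. integral {node N (int m - 1)..node N (int m)} f)" for n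
  proof (induction n)
    case 0 then show ?case by (simp add: node_def)
  next
    case (Suc n)
    have le: "node N (int n) \<le> node N (int (Suc n))" "0 \<le> node N (int n)"
      by (auto simp: node_def divide_right_mono)
    have "node N (int (Suc n)) \<le> 1" using Suc.prems by (simp add: node_def)
    then have "f integrable_on {0..node N (int (Suc n))}"
      by (intro integrable_continuous_interval continuous_on_subset[OF cf]) auto
    then have "integral {0..node N (int n)} f + integral {node N (int n)..node N (int (Suc n))} f = integral {0..node N (int (Suc n))} f"
    proof -
      note I = \<open>f integrable_on {0..node N (int (Suc n))}\<close>
      have "f integrable_on {0..node N (int n)}" "f integrable_on {node N (int n)..node N (int (Suc n))}"
        using le by (auto intro: integrable_subinterval_real[OF I])
      from has_integral_combine[OF le(2) le(1) this[THEN integrable_integral]]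
      show ?thesis by (rule integral_unique[symmetric])
    qed
    then show ?case using Suc by simp
  qed
  from this[of N] N show ?thesis by (simp add: node_def)
qed

lemma cont_sub01:
  assumes "continuous_on {0..1} f" "N \<ge> 1" "m \<in> {1..N}"
  shows "continuous_on {node N (int m - 1)..node N (int m)} f"
proof -
  have "{node N (int m - 1)..node N (int m)} \<subseteq> {0..1}" using assms(2,3)
    by (auto simp: node_def field_simps)
  then show ?thesis using assms(1) continuous_on_subset by blast
qed

lemma int_local:
  fixes f :: "real \<Rightarrow> real"
  assumes N: "N \<ge> 1" and cf: "continuous_on {0..1} f"
  shows "integral {0..1} f = (\<Sum>m=1..N. integral {0..1} (\<lambda>s. f (loc N (int m) s))) / real N"
proof -
  have "integral {0..1} f = (\<Sum>m=1..N. integral {node N (int m - 1)..node N (int m)} f)"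
    by (rule split_elems[OF N cf])
  also have "\<dots> = (\<Sum>m=1..N. integral {0..1} (\<lambda>s. f (loc N (int m) s)) / real N)"
    using subst_elem[OF N cont_sub01[OF cf N]] by (intro sum.cong) auto
  finally show ?thesis by (simp add: sum_divide_distrib)
qed

lemma Vh_cont: "g \<in> Vh N k \<Longrightarrow> continuous_on S g"
  unfolding Vh_def using continuous_on_subset by blast

lemma Vh_periodic: "g \<in> Vh N k \<Longrightarrow> g (x + 1) = g x"
  unfolding Vh_def by blast

lemma Vh_local:
  assumes g: "g \<in> Vh N k" and N: "N \<ge> 1" and i: "i \<in> {1..N}"
  shows "\<exists>q. degree q \<le> k \<and> (\<forall>s\<in>{0..1}. g (loc N (int i) s) = poly q s)"
proof -
  obtain p :: "real poly" where p: "degree p \<le> k" "\<forall>x\<in>{node N (int i - 1)..node N (int i)}. g x = poly p x"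
    using g i unfolding Vh_def by blast
  define q where "q = pcompose p [:(of_int (int i) - 1) / real N, 1 / real N:]"
  have "degree q \<le> k" using p(1) by (simp add: q_def degree_pcompose)
  moreover have "g (loc N (int i) s) = poly q s" if s: "s \<in> {0..1}" for s
  proof -
    have "loc N (int i) s \<in> {node N (int i - 1)..node N (int i)}"
      using s N by (auto simp: loc_def node_def divide_right_mono)
    have L: "loc N (int i) s = (real i - 1)/real N + s * (1/real N)" unfolding loc_def by (simp add: add_divide_distrib)
    show ?thesis using p(2) \<open>loc N (int i) s \<in> _\<close> by (simp add: q_def poly_pcompose L)
  qed
  ultimately show ?thesis by blast
qed

lemma Sfun_Sh1:
  assumes k: "k \<ge> 1" and N: "N \<ge> 1" and c: "cper N c"
  shows "Sfun N k c \<in> Sh1 N k"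
proof -
  have "integral {0..1} (\<lambda>x. Sfun N k c x * g x) = 0" if g: "g \<in> Sh2 N k" for g
  proof -
    have gV: "g \<in> Vh N k" and g0: "\<And>i. g (node N i) = 0" using g unfolding Sh2_def by auto
    have cont: "continuous_on {0..1} (\<lambda>x. Sfun N k c x * g x)"
      using Sfun_cont[OF k N] Vh_cont[OF gV] by (intro continuous_intros) (auto intro: continuous_on_subset)
    have "integral {0..1} (\<lambda>s. Sfun N k c (loc N (int m) s) * g (loc N (int m) s)) = 0" if m: "m \<in> {1..N}" for m
    proof -
      obtain q where q: "degree q \<le> k" "\<forall>s\<in>{0..1}. g (loc N (int m) s) = poly q s"
        using Vh_local[OF gV N m] by blast
      have q01: "poly q 0 = 0" "poly q 1 = 0"
        using q(2)[rule_format, of 0] g0[of "int m - 1"] q(2)[rule_format, of 1] g0[of "int m"]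
        by (simp_all add: loc_0 loc_1)
      have "integral {0..1} (\<lambda>s. Sfun N k c (loc N (int m) s) * g (loc N (int m) s))
          = integral {0..1} (\<lambda>s. poly q s * psi k s + c (int m - 1) / c (int m) * 0 + (c (int m) - 1) * 0 +
               0) * 0 + integral {0..1} (\<lambda>s. c (int m) * (poly q s * psi k s) + c (int m - 1) * (poly q s * psi k (1 - s)))"
      proof -
        have "integral {0..1} (\<lambda>s. Sfun N k c (loc N (int m) s) * g (loc N (int m) s))
            = integral {0..1} (\<lambda>s. c (int m) * (poly q s * psi k s) + c (int m - 1) * (poly q s * psi k (1 - s)))"
          by (rule integral_cong) (simp add: Sfun_loc[OF k N] q(2) algebra_simps)
        then show ?thesis by simp
      qed
      also have "\<dots> = c (int m) * integral {0..1} (\<lambda>s. poly q s * psi k s) + c (int m - 1) * integral {0..1} (\<lambda>s. poly q s * psi k (1 - s))"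
        by (simp add: integral_add_cmul integrable_continuous_interval continuous_intros
               integral_add integrable_on_cmult_left[simplified])
      also have "\<dots> = 0" using psi_bubble[OF k q(1) q01] psi_bubble_r[OF k q(1) q01] by simp
      finally show ?thesis .
    qed
    then show ?thesis using int_local[OF N cont] by simp
  qed
  then show ?thesis unfolding Sh1_def using Sfun_Vh[OF k N c] by auto
qed


lemma Vh_diff:
  assumes "f \<in> Vh N k" "g \<in> Vh N k"
  shows "(\<lambda>x. f x - g x) \<in> Vh N k"
proof -
  have "\<exists>p::real poly. degree p \<le> k \<and> (\<forall>x\<in>{node N (int i - 1)..node N (int i)}. f x - g x = poly p x)"
    if i: "i \<in> {1..N}" for i
  proof -
    obtain p :: "real poly" where p: "degree p \<le> k" "\<forall>x\<in>{node N (int i - 1)..node N (int i)}. f x = poly p x"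
      using assms(1) i unfolding Vh_def by blast
    obtain q :: "real poly" where q: "degree q \<le> k" "\<forall>x\<in>{node N (int i - 1)..node N (int i)}. g x = poly q x"
      using assms(2) i unfolding Vh_def by blast
    from p q show ?thesis by (intro exI[of _ "p - q"]) (auto intro: degree_diff_le)
  qed
  moreover have "continuous_on UNIV (\<lambda>x. f x - g x)"
    using Vh_cont[OF assms(1)] Vh_cont[OF assms(2)] by (intro continuous_intros)
  ultimately show ?thesis using assms unfolding Vh_def by auto
qed

lemma int_prod_diff:
  fixes f g G :: "real \<Rightarrow> real"
  assumes "continuous_on {0..1} f" "continuous_on {0..1} g" "continuous_on {0..1} G"
  shows "integral {0..1} (\<lambda>x. (f x - g x) * G x) = integral {0..1} (\<lambda>x. f x * G x) - integral {0..1} (\<lambda>x. g x * G x)"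
proof -
  have "(\<lambda>x. f x * G x) integrable_on {0..1}" "(\<lambda>x. g x * G x) integrable_on {0..1}"
    using assms by (auto intro!: integrable_continuous_interval continuous_on_mult)
  then show ?thesis by (simp add: left_diff_distrib integral_diff)
qed

lemma Sh1_diff:
  assumes "f \<in> Sh1 N k" "g \<in> Sh1 N k"
  shows "(\<lambda>x. f x - g x) \<in> Sh1 N k"
proof -
  have fV: "f \<in> Vh N k" and gV: "g \<in> Vh N k" using assms unfolding Sh1_def by auto
  have "integral {0..1} (\<lambda>x. (f x - g x) * G x) = 0" if G: "G \<in> Sh2 N k" for G
  proof -
    have GV: "G \<in> Vh N k" using G unfolding Sh2_def by auto
    have "integral {0..1} (\<lambda>x. (f x - g x) * G x) = integral {0..1} (\<lambda>x. f x * G x) - integral {0..1} (\<lambda>x. g x * G x)"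
      by (rule int_prod_diff) (use Vh_cont fV gV GV in blast)+
    also have "\<dots> = 0" using assms G unfolding Sh1_def by auto
    finally show ?thesis .
  qed
  then show ?thesis unfolding Sh1_def using Vh_diff[OF fV gV] by auto
qed

lemma zero_of_int_sq:
  fixes g :: "real \<Rightarrow> real"
  assumes "continuous_on {0..1} g" "integral {0..1} (\<lambda>x. g x * g x) = 0" "x \<in> {0..1}"
  shows "g x = 0"
proof -
  have c: "continuous_on (cbox 0 1) (\<lambda>x. g x * g x)" using assms(1) by (auto intro!: continuous_intros)
  have "((\<lambda>x. g x * g x) has_integral 0) (cbox 0 1)"
    using integrable_integral[OF integrable_continuous_interval[OF assms(1)[THEN continuous_on_mult, OF assms(1)]]] assms(2)
    by simp
  then have "g x * g x = 0"
    using has_integral_0_cbox_imp_0[OF c _ _ _, of x] assms(3) by (auto simp: box_real)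
  then show ?thesis by simp
qed

lemma per_int:
  fixes f :: "real \<Rightarrow> 'a"
  assumes "\<And>x. f (x + 1) = f x"
  shows "f (x + of_int n) = f x"
proof -
  have pn: "f (y + real m) = f y" for y m
  proof (induction m)
    case (Suc m)
    have "y + real (Suc m) = (y + real m) + 1" by simp
    then show ?case using Suc assms by metis
  qed simp
  show ?thesis
  proof (cases "n \<ge> 0")
    case True
    then show ?thesis using pn[of x "nat n"] by simp
  next
    case False
    have "f (x + of_int n + real (nat (-n))) = f (x + of_int n)" by (rule pn)
    then show ?thesis using False by simp
  qed
qed

lemma periodic_eq:
  fixes f g :: "real \<Rightarrow> real"
  assumes "\<And>x. f (x + 1) = f x" "\<And>x. g (x + 1) = g x" "\<And>x. x \<in> {0..1} \<Longrightarrow> f x = g x"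
  shows "f = g"
proof
  fix x :: real
  have x: "x = frac x + of_int \<lfloor>x\<rfloor>" by (simp add: frac_def)
  have "frac x \<in> {0..1}" using frac_lt_1[of x] frac_ge_0[of x] by simp
  then have "f (frac x) = g (frac x)" using assms(3) by blast
  then show "f x = g x" using per_int[of f, OF assms(1)] per_int[of g, OF assms(2)] x by metis
qed

lemma Sh1_rep:
  assumes k: "k \<ge> 1" and N: "N \<ge> 1" and phi: "\<phi> \<in> Sh1 N k"
  defines "d \<equiv> (\<lambda>j. \<phi> (node N j) / psi k 1)"
  shows "cper N d" "\<forall>x\<in>{0..1}. \<phi> x = Sfun N k d x"
proof -
  have pV: "\<phi> \<in> Vh N k" using phi unfolding Sh1_def by auto
  show cd: "cper N d" unfolding cper_def d_def
  proof
    fix j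
    have "node N (j + int N) = node N j + 1" using N by (simp add: node_def field_simps)
    then show "\<phi> (node N (j + int N)) / psi k 1 = \<phi> (node N j) / psi k 1" using Vh_periodic[OF pV] by simp
  qed
  define g where "g = (\<lambda>x. \<phi> x - Sfun N k d x)"
  have SV: "Sfun N k d \<in> Sh1 N k" by (rule Sfun_Sh1[OF k N cd])
  have gV: "g \<in> Vh N k" unfolding g_def using Vh_diff[OF pV] SV unfolding Sh1_def by auto
  have "g (node N j) = 0" for j unfolding g_def using Sfun_node[OF k N] psi_1[OF k] by (simp add: d_def)
  then have gS2: "g \<in> Sh2 N k" unfolding Sh2_def using gV by auto
  have gS1: "g \<in> Sh1 N k" unfolding g_def by (rule Sh1_diff[OF phi SV])
  then have "integral {0..1} (\<lambda>x. g x * g x) = 0" using gS2 unfolding Sh1_def by auto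
  then have "g x = 0" if "x \<in> {0..1}" for x using zero_of_int_sq Vh_cont[OF gV] that by blast
  then show "\<forall>x\<in>{0..1}. \<phi> x = Sfun N k d x" unfolding g_def by auto
qed

lemma pi1_char:
  assumes k: "k \<ge> 1" and N: "N \<ge> 1" and v: "continuous_on UNIV v"
    and w: "w \<in> Sh1 N k" and orth: "\<forall>\<phi>\<in>Sh1 N k. integral {0..1} (\<lambda>x. (v x - w x) * \<phi> x) = 0"
  shows "pi1 N k v = w"
  unfolding pi1_def
proof (rule the_equality)
  show "w \<in> Sh1 N k \<and> (\<forall>\<phi>\<in>Sh1 N k. integral {0..1} (\<lambda>x. (v x - w x) * \<phi> x) = 0)" using w orth by blast
next
  fix w' assume w': "w' \<in> Sh1 N k \<and> (\<forall>\<phi>\<in>Sh1 N k. integral {0..1} (\<lambda>x. (v x - w' x) * \<phi> x) = 0)"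
  have wV: "w \<in> Vh N k" "w' \<in> Vh N k" using w w' unfolding Sh1_def by auto
  have D: "(\<lambda>x. w' x - w x) \<in> Sh1 N k" using Sh1_diff w w' by blast
  have cD: "continuous_on {0..1} (\<lambda>x. w' x - w x)" using Vh_cont[OF wV(1)] Vh_cont[OF wV(2)] by (intro continuous_intros)
  have cv: "continuous_on {0..1} v" using v by (rule continuous_on_subset) auto
  have "integral {0..1} (\<lambda>x. (w' x - w x) * (w' x - w x)) =
        integral {0..1} (\<lambda>x. (v x - w x) * (w' x - w x)) - integral {0..1} (\<lambda>x. (v x - w' x) * (w' x - w x))"
  proof -
    have "integral {0..1} (\<lambda>x. ((v x - w x) - (v x - w' x)) * (w' x - w x)) =
        integral {0..1} (\<lambda>x. (v x - w x) * (w' x - w x)) - integral {0..1} (\<lambda>x. (v x - w' x) * (w' x - w x))"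
      by (rule int_prod_diff) (use cv cD Vh_cont[OF wV(1)] Vh_cont[OF wV(2)] in \<open>auto intro!: continuous_intros\<close>)
    then show ?thesis by simp
  qed
  also have "\<dots> = 0" using orth w' D by auto
  finally have z: "integral {0..1} (\<lambda>x. (w' x - w x) * (w' x - w x)) = 0" .
  have "w' x = w x" if "x \<in> {0..1}" for x using zero_of_int_sq[OF cD z that] by simp
  then show "w' = w" using periodic_eq[of w' w] Vh_periodic wV by metis
qed


definition Aloc :: "nat \<Rightarrow> nat \<Rightarrow> (real \<Rightarrow> real) \<Rightarrow> int \<Rightarrow> real" where
  "Aloc N k f m = integral {0..1} (\<lambda>s. f (loc N m s) * psi k s)"
definition Bloc :: "nat \<Rightarrow> nat \<Rightarrow> (real \<Rightarrow> real) \<Rightarrow> int \<Rightarrow> real" where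
  "Bloc N k f m = integral {0..1} (\<lambda>s. f (loc N m s) * psi k (1 - s))"

lemma loc_shift: "N \<ge> 1 \<Longrightarrow> loc N (m + int N) s = loc N m s + 1"
  by (simp add: loc_def field_simps)

lemma Aloc_per: "N \<ge> 1 \<Longrightarrow> (\<And>x. f (x + 1) = f x) \<Longrightarrow> Aloc N k f (m + int N) = Aloc N k f m"
  by (simp add: Aloc_def loc_shift)
lemma Bloc_per: "N \<ge> 1 \<Longrightarrow> (\<And>x. f (x + 1) = f x) \<Longrightarrow> Bloc N k f (m + int N) = Bloc N k f m"
  by (simp add: Bloc_def loc_shift)

lemma cont_loc[continuous_intros]: "continuous_on S g \<Longrightarrow> continuous_on S (\<lambda>x. loc N m (g x))"
  unfolding loc_def divide_inverse by (intro continuous_intros)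

lemma integral_lin2:
  fixes f g :: "real \<Rightarrow> real"
  assumes "f integrable_on S" "g integrable_on S"
  shows "integral S (\<lambda>x. a * f x + b * g x) = a * integral S f + b * integral S g"
proof -
  have "(\<lambda>x. a * f x) integrable_on S" "(\<lambda>x. b * g x) integrable_on S"
    using integrable_on_cmult_left[OF assms(1), of a] integrable_on_cmult_left[OF assms(2), of b] by simp_all
  then show ?thesis by (simp add: integral_add)
qed

lemma sum_shift_per:
  fixes F :: "int \<Rightarrow> real"
  assumes N: "N \<ge> 1" and F: "\<And>j. F (j + int N) = F j"
  shows "(\<Sum>m=1..N. F (int m + 1)) = (\<Sum>m=1..N. F (int m))"
proof -
  obtain n where n: "N = Suc n" using N by (cases N) auto
  have "(\<Sum>m=1..N. F (int m + 1)) = (\<Sum>m<N. F (int (Suc m) + 1))" by (simp add: sum.atLeast1_atMost_eq)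
  also have "\<dots> = (\<Sum>m<n. F (int m + 2)) + F (int n + 2)" by (simp add: n algebra_simps)
  also have "F (int n + 2) = F 1" using F[of 1] n by (simp add: algebra_simps)
  finally have L: "(\<Sum>m=1..N. F (int m + 1)) = (\<Sum>m<n. F (int m + 2)) + F 1" .
  have "(\<Sum>m=1..N. F (int m)) = (\<Sum>m<N. F (int (Suc m)))" by (simp add: sum.atLeast1_atMost_eq)
  also have "\<dots> = F 1 + (\<Sum>m<n. F (int m + 2))" unfolding n sum.lessThan_Suc_shift by (simp add: algebra_simps)
  finally show ?thesis using L by simp
qed

lemma pairing:
  fixes f :: "real \<Rightarrow> real"
  assumes k: "k \<ge> 1" and N: "N \<ge> 1" and cf: "continuous_on UNIV f" and pf: "\<And>x. f (x + 1) = f x"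
    and d: "cper N d"
  shows "integral {0..1} (\<lambda>x. f x * Sfun N k d x) =
     (\<Sum>m=1..N. d (int m) * (Aloc N k f (int m) + Bloc N k f (int m + 1))) / real N"
proof -
  have cont: "continuous_on {0..1} (\<lambda>x. f x * Sfun N k d x)"
    using cf Sfun_cont[OF k N] by (intro continuous_intros) (auto intro: continuous_on_subset)
  have loc_eq: "integral {0..1} (\<lambda>s. f (loc N m s) * Sfun N k d (loc N m s)) =
      d m * Aloc N k f m + d (m - 1) * Bloc N k f m" for m
  proof -
    have "integral {0..1} (\<lambda>s. f (loc N m s) * Sfun N k d (loc N m s)) =
        integral {0..1} (\<lambda>s. d m * (f (loc N m s) * psi k s) + d (m - 1) * (f (loc N m s) * psi k (1 - s)))"
      by (rule integral_cong) (simp add: Sfun_loc[OF k N] algebra_simps)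
    also have "\<dots> = d m * Aloc N k f m + d (m - 1) * Bloc N k f m"
    proof -
      have c1: "continuous_on {0..1} (\<lambda>s. f (loc N m s) * psi k s)"
               "continuous_on {0..1} (\<lambda>s. f (loc N m s) * psi k (1 - s))"
        by (auto intro!: continuous_intros continuous_on_compose2[OF cf])
      have i1: "(\<lambda>s. d m * (f (loc N m s) * psi k s)) integrable_on {0..1}"
               "(\<lambda>s. d (m - 1) * (f (loc N m s) * psi k (1 - s))) integrable_on {0..1}"
        using c1 by (auto intro!: integrable_continuous_interval continuous_intros)
      show ?thesis unfolding Aloc_def Bloc_def using i1 by (simp add: integral_add)
    qed
    finally show ?thesis .
  qed
  have "integral {0..1} (\<lambda>x. f x * Sfun N k d x) =
     (\<Sum>m=1..N. d (int m) * Aloc N k f (int m) + d (int m - 1) * Bloc N k f (int m)) / real N"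
    using int_local[OF N cont] loc_eq by simp
  also have "(\<Sum>m=1..N. d (int m) * Aloc N k f (int m) + d (int m - 1) * Bloc N k f (int m)) =
     (\<Sum>m=1..N. d (int m) * Aloc N k f (int m)) + (\<Sum>m=1..N. d (int m - 1) * Bloc N k f (int m))"
    by (rule sum.distrib)
  also have "(\<Sum>m=1..N. d (int m - 1) * Bloc N k f (int m)) = (\<Sum>m=1..N. d (int m + 1 - 1) * Bloc N k f (int m + 1))"
  proof -
    have "d (j + int N - 1) = d (j - 1)" for j using d unfolding cper_def
      by (metis add.commute add_diff_eq)
    then have "(\<Sum>m=1..N. d (int m + 1 - 1) * Bloc N k f (int m + 1)) = (\<Sum>m=1..N. d (int m - 1) * Bloc N k f (int m))"
      using sum_shift_per[OF N, of "\<lambda>j. d (j - 1) * Bloc N k f j"] Bloc_per[of N f k, OF N pf] by simp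
    then show ?thesis by simp
  qed
  finally show ?thesis by (simp add: sum.distrib[symmetric] algebra_simps)
qed

lemma pa_r: "integral {0..1} (\<lambda>s. psi k (1 - s) * psi k (1 - s)) = pa k"
  unfolding pa_def by (rule reflect01[of "\<lambda>s. psi k s * psi k s", simplified])
    (auto intro!: integrable_continuous_interval continuous_intros)

lemma Aloc_Sfun:
  assumes k: "k \<ge> 1" and N: "N \<ge> 1"
  shows "Aloc N k (Sfun N k c) m = c m * pa k + c (m - 1) * pb k"
        "Bloc N k (Sfun N k c) m = c m * pb k + c (m - 1) * pa k"
proof -
  have i: "(\<lambda>s. psi k s * psi k s) integrable_on {0..1}" "(\<lambda>s. psi k s * psi k (1 - s)) integrable_on {0..1}"
     "(\<lambda>s. psi k (1 - s) * psi k (1 - s)) integrable_on {0..1}"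
    by (auto intro!: integrable_continuous_interval continuous_intros)
  have "Aloc N k (Sfun N k c) m = integral {0..1} (\<lambda>s. c m * (psi k s * psi k s) + c (m - 1) * (psi k s * psi k (1 - s)))"
    unfolding Aloc_def by (rule integral_cong) (simp add: Sfun_loc[OF k N] algebra_simps)
  also have "\<dots> = c m * pa k + c (m - 1) * pb k" using i
    by (simp add: integral_lin2 pa_def pb_def)
  finally show "Aloc N k (Sfun N k c) m = c m * pa k + c (m - 1) * pb k" .
  have "Bloc N k (Sfun N k c) m = integral {0..1} (\<lambda>s. c m * (psi k s * psi k (1 - s)) + c (m - 1) * (psi k (1 - s) * psi k (1 - s)))"
    unfolding Bloc_def by (rule integral_cong) (simp add: Sfun_loc[OF k N] algebra_simps)
  also have "\<dots> = c m * pb k + c (m - 1) * pa k" using i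
    by (simp add: integral_lin2 pa_r pb_def)
  finally show "Bloc N k (Sfun N k c) m = c m * pb k + c (m - 1) * pa k" .
qed

lemma Aloc_diff:
  assumes "continuous_on UNIV f" "continuous_on UNIV g"
  shows "Aloc N k (\<lambda>x. f x - g x) m = Aloc N k f m - Aloc N k g m"
        "Bloc N k (\<lambda>x. f x - g x) m = Bloc N k f m - Bloc N k g m"
proof -
  have cf: "continuous_on {0..1} (\<lambda>s. f (loc N m s))" "continuous_on {0..1} (\<lambda>s. g (loc N m s))"
    by (auto intro!: continuous_on_compose2[OF assms(1)] continuous_on_compose2[OF assms(2)] continuous_intros)
  have cp: "continuous_on {0..1} (psi k)" "continuous_on {0..1} (\<lambda>s. psi k (1 - s))"
    by (auto intro!: continuous_intros)
  show "Aloc N k (\<lambda>x. f x - g x) m = Aloc N k f m - Aloc N k g m"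
    unfolding Aloc_def using int_prod_diff[OF cf cp(1)] by simp
  show "Bloc N k (\<lambda>x. f x - g x) m = Bloc N k f m - Bloc N k g m"
    unfolding Bloc_def using int_prod_diff[OF cf cp(2)] by simp
qed


lemma cper_shift:
  assumes "cper N c"
  shows "c (j + int N * t) = c j"
proof -
  have pn: "c (i + int N * int m) = c i" for i m
  proof (induction m)
    case (Suc m)
    have "i + int N * int (Suc m) = (i + int N * int m) + int N" by (simp add: algebra_simps)
    then show ?case using Suc assms unfolding cper_def by metis
  qed simp
  show ?thesis
  proof (cases "t \<ge> 0")
    case True then show ?thesis using pn[of j "nat t"] by simp
  next
    case False
    have "c (j + int N * t + int N * int (nat (-t))) = c (j + int N * t)" by (rule pn)
    then show ?thesis using False by simp
  qed
qed

lemma cper_rep: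
  assumes N: "N \<ge> 1" and c: "cper N c"
  shows "\<exists>j'\<in>{1..int N}. c j = c j'"
proof -
  define j' where "j' = (j - 1) mod int N + 1"
  have "j = j' + int N * ((j - 1) div int N)" unfolding j'_def by (simp add: algebra_simps)
  then have "c j = c j'" using cper_shift[OF c] by metis
  moreover have "j' \<in> {1..int N}"
  proof -
    have "0 \<le> (j - 1) mod int N" "(j - 1) mod int N < int N" using N by simp_all
    then show ?thesis unfolding j'_def by auto
  qed
  ultimately show ?thesis by blast
qed

lemma cper_max:
  assumes N: "N \<ge> 1" and c: "cper N c"
  shows "\<exists>j0. \<forall>j. \<bar>c j\<bar> \<le> \<bar>c j0\<bar>"
proof -
  define M where "M = Max ((\<lambda>j. \<bar>c j\<bar>) ` {1..int N})"
  have ne: "(\<lambda>j. \<bar>c j\<bar>) ` {1..int N} \<noteq> {}" using N by auto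
  have "M \<in> (\<lambda>j. \<bar>c j\<bar>) ` {1..int N}" unfolding M_def by (rule Max_in[OF _ ne]) auto
  then obtain j0 where j0: "M = \<bar>c j0\<bar>" by auto
  have "\<bar>c j\<bar> \<le> M" for j
  proof -
    obtain j' where "j' \<in> {1..int N}" "c j = c j'" using cper_rep[OF N c] by blast
    then show ?thesis unfolding M_def by (auto intro!: Max_ge)
  qed
  then show ?thesis using j0 by auto
qed

lemma max_principle:
  fixes a b K :: real
  assumes N: "N \<ge> 1" and ab: "\<bar>b\<bar> < a" and e: "cper N e"
    and K: "\<And>j. \<bar>2 * a * e j + b * (e (j - 1) + e (j + 1))\<bar> \<le> K"
  shows "\<bar>e j\<bar> \<le> K / (2 * (a - \<bar>b\<bar>))"
proof -
  obtain j0 where j0: "\<And>j. \<bar>e j\<bar> \<le> \<bar>e j0\<bar>" using cper_max[OF N e] by blast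
  let ?M = "\<bar>e j0\<bar>"
  have "\<bar>b * (e (j0 - 1) + e (j0 + 1))\<bar> \<le> \<bar>b\<bar> * (2 * ?M)"
    unfolding abs_mult using j0[of "j0 - 1"] j0[of "j0 + 1"]
    by (intro mult_left_mono) (auto simp: abs_triangle_ineq[THEN order_trans])
  moreover have "\<bar>2 * a * e j0\<bar> = 2 * a * ?M" using ab by (simp add: abs_mult)
  moreover have "\<bar>2 * a * e j0\<bar> \<le> \<bar>2 * a * e j0 + b * (e (j0 - 1) + e (j0 + 1))\<bar> + \<bar>b * (e (j0 - 1) + e (j0 + 1))\<bar>"
    by (smt (verit) abs_triangle_ineq4)
  ultimately have "2 * a * ?M \<le> K + \<bar>b\<bar> * (2 * ?M)" using K[of j0] by linarith
  then have "2 * (a - \<bar>b\<bar>) * ?M \<le> K" by (simp add: algebra_simps)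
  then have "?M \<le> K / (2 * (a - \<bar>b\<bar>))" using ab by (simp add: field_simps)
  then show ?thesis using j0[of j] by linarith
qed

lemma neumann_solve:
  fixes a b :: real and \<beta> :: "int \<Rightarrow> real"
  assumes N: "N \<ge> 1" and ab: "\<bar>b\<bar> < a" and bp: "cper N \<beta>"
  shows "\<exists>c. cper N c \<and> (\<forall>j. 2 * a * c j + b * (c (j - 1) + c (j + 1)) = \<beta> j)"
proof -
  have a: "a > 0" using ab by linarith
  obtain j0 where j0: "\<And>j. \<bar>\<beta> j\<bar> \<le> \<bar>\<beta> j0\<bar>" using cper_max[OF N bp] by blast
  define B where "B = \<bar>\<beta> j0\<bar> / (2 * a)"
  define \<rho> where "\<rho> = \<bar>b\<bar> / a"
  have \<rho>: "0 \<le> \<rho>" "\<rho> < 1" using ab a by (auto simp: \<rho>_def)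
  define u where "u = rec_nat (\<lambda>j. \<beta> j / (2 * a)) (\<lambda>n un j. - (b / (2 * a)) * (un (j - 1) + un (j + 1)))"
  have u0: "u 0 j = \<beta> j / (2 * a)" for j by (simp add: u_def)
  have uS: "u (Suc n) j = - (b / (2 * a)) * (u n (j - 1) + u n (j + 1))" for n j by (simp add: u_def)
  have ub: "\<bar>u n j\<bar> \<le> \<rho> ^ n * B" for n j
  proof (induction n arbitrary: j)
    case 0 then show ?case using j0[of j] a by (simp add: u0 B_def abs_divide divide_right_mono)
  next
    case (Suc n)
    have "\<bar>u (Suc n) j\<bar> = \<bar>b\<bar> / (2 * a) * \<bar>u n (j - 1) + u n (j + 1)\<bar>"
      using a by (simp add: uS abs_mult abs_divide)
    also have "\<dots> \<le> \<bar>b\<bar> / (2 * a) * (2 * (\<rho> ^ n * B))"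
      using Suc.IH[of "j - 1"] Suc.IH[of "j + 1"] a
      by (intro mult_left_mono) (auto simp: abs_triangle_ineq[THEN order_trans])
    also have "\<dots> = \<rho> ^ Suc n * B" using a by (simp add: \<rho>_def field_simps)
    finally show ?case .
  qed
  have sm: "summable (\<lambda>n. u n j)" for j
    by (rule summable_comparison_test'[where N=0, OF summable_mult2[OF summable_geometric]])
       (use \<rho> ub in auto)
  define c where "c j = (\<Sum>n. u n j)" for j
  have up: "u n (j + int N) = u n j" for n j
  proof (induction n arbitrary: j)
    case 0 then show ?case using bp by (simp add: u0 cper_def)
  next
    case (Suc n)
    have "u n (j + int N - 1) = u n (j - 1)" "u n (j + int N + 1) = u n (j + 1)"
      using Suc.IH[of "j - 1"] Suc.IH[of "j + 1"] by (simp_all add: algebra_simps)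
    then show ?case by (simp add: uS)
  qed
  have cp: "cper N c" unfolding cper_def c_def using up by simp
  have eq: "2 * a * c j + b * (c (j - 1) + c (j + 1)) = \<beta> j" for j
  proof -
    have "(\<Sum>n. u (Suc n) j) = c j - u 0 j" unfolding c_def by (rule suminf_split_head[OF sm])
    moreover have "(\<Sum>n. u (Suc n) j) = - (b / (2 * a)) * (c (j - 1) + c (j + 1))"
    proof -
      have "(\<Sum>n. u (Suc n) j) = (\<Sum>n. - (b / (2 * a)) * (u n (j - 1) + u n (j + 1)))" by (simp add: uS)
      also have "\<dots> = - (b / (2 * a)) * (\<Sum>n. u n (j - 1) + u n (j + 1))"
        by (rule suminf_mult[OF summable_add[OF sm sm]])
      also have "(\<Sum>n. u n (j - 1) + u n (j + 1)) = c (j - 1) + c (j + 1)"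
        unfolding c_def by (rule suminf_add[OF sm sm, symmetric])
      finally show ?thesis .
    qed
    ultimately have E: "c j - \<beta> j / (2 * a) = - (b / (2 * a)) * (c (j - 1) + c (j + 1))" by (simp add: u0)
    have "2 * a * (c j - \<beta> j / (2 * a)) = 2 * a * (- (b / (2 * a)) * (c (j - 1) + c (j + 1)))" using E by simp
    then have "2 * a * c j - \<beta> j = - b * (c (j - 1) + c (j + 1))" using a by (simp add: right_diff_distrib)
    then show ?thesis by (simp add: algebra_simps)
  qed
  show ?thesis using cp eq by blast
qed

lemma pi1_Sfun:
  assumes k: "k \<ge> 1" and N: "N \<ge> 1" and cv: "continuous_on UNIV v" and pv: "\<And>x. v (x + 1) = v x"
  shows "\<exists>c. cper N c \<and> (\<forall>j. 2 * pa k * c j + pb k * (c (j - 1) + c (j + 1)) = Aloc N k v j + Bloc N k v (j + 1))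
           \<and> pi1 N k v = Sfun N k c"
proof -
  define \<beta> where "\<beta> j = Aloc N k v j + Bloc N k v (j + 1)" for j
  have bp: "cper N \<beta>" unfolding cper_def \<beta>_def
  proof
    fix j
    have "Bloc N k v (j + int N + 1) = Bloc N k v (j + 1)"
      using Bloc_per[of N v k "j + 1", OF N pv] by (simp add: algebra_simps)
    then show "Aloc N k v (j + int N) + Bloc N k v (j + int N + 1) = Aloc N k v j + Bloc N k v (j + 1)"
      using Aloc_per[of N v k j, OF N pv] by simp
  qed
  obtain c where c: "cper N c" "\<And>j. 2 * pa k * c j + pb k * (c (j - 1) + c (j + 1)) = \<beta> j"
    using neumann_solve[OF N pa_pb[OF k] bp] by blast
  have SC: "continuous_on UNIV (Sfun N k c)" by (rule Sfun_cont[OF k N])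
  have orth: "\<forall>\<phi>\<in>Sh1 N k. integral {0..1} (\<lambda>x. (v x - Sfun N k c x) * \<phi> x) = 0"
  proof
    fix \<phi> assume phi: "\<phi> \<in> Sh1 N k"
    define d where "d = (\<lambda>j. \<phi> (node N j) / psi k 1)"
    have d: "cper N d" "\<forall>x\<in>{0..1}. \<phi> x = Sfun N k d x" using Sh1_rep[OF k N phi] unfolding d_def by auto
    have "integral {0..1} (\<lambda>x. (v x - Sfun N k c x) * \<phi> x) = integral {0..1} (\<lambda>x. (v x - Sfun N k c x) * Sfun N k d x)"
      by (rule integral_cong) (use d in auto)
    also have "\<dots> = (\<Sum>m=1..N. d (int m) * (Aloc N k (\<lambda>x. v x - Sfun N k c x) (int m) + Bloc N k (\<lambda>x. v x - Sfun N k c x) (int m + 1))) / real N"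
      by (rule pairing[OF k N _ _ d(1)]) (use cv SC pv Sfun_periodic[OF N c(1)] in \<open>auto intro!: continuous_intros\<close>)
    also have "\<dots> = 0"
    proof -
      have "Aloc N k (\<lambda>x. v x - Sfun N k c x) j + Bloc N k (\<lambda>x. v x - Sfun N k c x) (j + 1) = 0" for j
      proof -
        have A1: "Aloc N k (\<lambda>x. v x - Sfun N k c x) j = Aloc N k v j - (c j * pa k + c (j - 1) * pb k)"
          using Aloc_diff(1)[OF cv SC, of N k j] Aloc_Sfun(1)[OF k N, of c j] by simp
        have B1: "Bloc N k (\<lambda>x. v x - Sfun N k c x) (j + 1) = Bloc N k v (j + 1) - (c (j + 1) * pb k + c j * pa k)"
          using Aloc_diff(2)[OF cv SC, of N k "j + 1"] Aloc_Sfun(2)[OF k N, of c "j + 1"] by simp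
        show ?thesis using A1 B1 c(2)[of j] unfolding \<beta>_def by (simp add: algebra_simps)
      qed
      then show ?thesis by simp
    qed
    finally show "integral {0..1} (\<lambda>x. (v x - Sfun N k c x) * \<phi> x) = 0" .
  qed
  have "pi1 N k v = Sfun N k c" by (rule pi1_char[OF k N cv Sfun_Sh1[OF k N c(1)] orth])
  then show ?thesis using c unfolding \<beta>_def by blast
qed


lemma taylor_bound:
  fixes g :: "real \<Rightarrow> real"
  assumes n: "n > 0"
    and der: "\<forall>j<n. \<forall>x. ((deriv ^^ j) g has_real_derivative (deriv ^^ Suc j) g x) (at x)"
    and bnd: "\<forall>x. \<bar>(deriv ^^ n) g x\<bar> \<le> S" and t: "t \<ge> 0"
  shows "\<bar>g (x0 + t) - (\<Sum>j<n. (deriv ^^ j) g x0 / fact j * t ^ j)\<bar> \<le> S * t ^ n / fact n"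
proof (cases "t = 0")
  case True
  have S: "S \<ge> 0" using bnd by (meson abs_ge_zero order_trans)
  obtain n' where n': "n = Suc n'" using n by (cases n) auto
  have "(\<Sum>j<n. (deriv ^^ j) g x0 / fact j * t ^ j) = g x0"
    unfolding n' sum.lessThan_Suc_shift using True by simp
  then show ?thesis using True S n by simp
next
  case False
  then have tp: "t > 0" using t by simp
  have "\<exists>\<tau>. x0 < \<tau> \<and> \<tau> < x0 + t \<and>
    g (x0 + t) = (\<Sum>m<n. ((deriv ^^ m) g x0 / fact m) * (x0 + t - x0)^m) + ((deriv ^^ n) g \<tau> / fact n) * (x0 + t - x0)^n"
    by (rule Taylor_up[where diff = "\<lambda>j. (deriv ^^ j) g" and a = x0]) (use n der tp in auto)
  then obtain \<tau> where \<tau>: "g (x0 + t) = (\<Sum>m<n. ((deriv ^^ m) g x0 / fact m) * t^m) + ((deriv ^^ n) g \<tau> / fact n) * t^n"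
    by auto
  have "\<bar>(deriv ^^ n) g \<tau> / fact n * t^n\<bar> \<le> S * t ^ n / fact n"
    using bnd t by (simp add: abs_mult abs_divide divide_right_mono mult_right_mono)
  then show ?thesis using \<tau> by simp
qed

lemma deriv_per:
  fixes g :: "real \<Rightarrow> real"
  assumes "\<And>x. g (x + 1) = g x" "\<And>x. (g has_real_derivative g' x) (at x)"
  shows "g' (x + 1) = g' x"
proof -
  have "((\<lambda>y. g (y + 1)) has_real_derivative g' (x + 1)) (at x)"
    using assms(2)[of "x + 1"] by (simp add: DERIV_shift)
  then have "(g has_real_derivative g' (x + 1)) (at x)" using assms(1) by simp
  then show ?thesis using assms(2)[of x] DERIV_unique by blast
qed

lemma Cp_facts:
  assumes "Cp n v"
  shows "\<forall>j<n. \<forall>x. ((deriv ^^ j) v has_real_derivative (deriv ^^ Suc j) v x) (at x)"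
    "continuous_on UNIV ((deriv ^^ n) v)" "continuous_on UNIV v"
    "\<And>j x. j \<le> n \<Longrightarrow> (deriv ^^ j) v (x + 1) = (deriv ^^ j) v x"
proof -
  show d: "\<forall>j<n. \<forall>x. ((deriv ^^ j) v has_real_derivative (deriv ^^ Suc j) v x) (at x)"
    "continuous_on UNIV ((deriv ^^ n) v)" "continuous_on UNIV v" using assms unfolding Cp_def by auto
  fix j x assume "j \<le> n"
  then show "(deriv ^^ j) v (x + 1) = (deriv ^^ j) v x"
  proof (induction j arbitrary: x)
    case 0 then show ?case using assms unfolding Cp_def by simp
  next
    case (Suc j)
    have "\<And>x. (deriv ^^ j) v (x + 1) = (deriv ^^ j) v x" using Suc by simp
    moreover have "\<And>x. ((deriv ^^ j) v has_real_derivative (deriv ^^ Suc j) v x) (at x)" using d(1) Suc.prems by simp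
    ultimately show ?case by (rule deriv_per)
  qed
qed

lemma supnorm_bound:
  fixes f :: "real \<Rightarrow> real"
  assumes c: "continuous_on UNIV f" and p: "\<And>x. f (x + 1) = f x"
  shows "\<bar>f x\<bar> \<le> supnorm f"
proof -
  have "compact (f ` {0..1})" by (rule compact_continuous_image[OF continuous_on_subset[OF c]]) auto
  then obtain M where M: "\<forall>y\<in>f ` {0..1}. norm y \<le> M" using compact_imp_bounded bounded_iff by metis
  have "\<bar>f y\<bar> \<le> M" for y
  proof -
    have y: "y = frac y + of_int \<lfloor>y\<rfloor>" by (simp add: frac_def)
    have "frac y \<in> {0..1}" using frac_lt_1[of y] frac_ge_0[of y] by simp
    then have "\<bar>f (frac y)\<bar> \<le> M" using M by auto
    then show ?thesis using per_int[of f, OF p, of "frac y" "\<lfloor>y\<rfloor>"] y by simp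
  qed
  then have "bdd_above (range (\<lambda>x. \<bar>f x\<bar>))" by (intro bdd_aboveI[where M=M]) auto
  then show ?thesis unfolding supnorm_def by (rule cSUP_upper[OF UNIV_I])
qed

lemma loc_eq: "loc N m s = node N (m - 1) + (1 / real N) * s"
  by (simp add: loc_def node_def add_divide_distrib)

lemma local_exp:
  fixes v :: "real \<Rightarrow> real" and CL S :: real
  assumes k: "k \<ge> 1" and N: "N \<ge> 1"
    and der: "\<forall>j<k+2. \<forall>x. ((deriv ^^ j) v has_real_derivative (deriv ^^ Suc j) v x) (at x)"
    and bnd: "\<forall>x. \<bar>(deriv ^^ (k+2)) v x\<bar> \<le> S"
    and cv: "continuous_on UNIV v"
    and CL: "\<forall>(f::real\<Rightarrow>real) B. continuous_on {0..1} f \<longrightarrow> (\<forall>s\<in>{0..1}. \<bar>f s\<bar> \<le> B) \<longrightarrow>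
            \<bar>Lam k f\<bar> \<le> CL * B \<and> \<bar>Lamr k f\<bar> \<le> CL * B"
  shows "\<bar>Lam k (\<lambda>s. v (loc N m s)) - Lam k (\<lambda>s. s^(k+1)) * ((deriv ^^ (k+1)) v (node N (m - 1)) / fact (k+1) * (1 / real N)^(k+1))\<bar>
            \<le> CL * (S * (1 / real N)^(k+2) / fact (k+2))"
    "\<bar>Lamr k (\<lambda>s. v (loc N m s)) - Lamr k (\<lambda>s. s^(k+1)) * ((deriv ^^ (k+1)) v (node N (m - 1)) / fact (k+1) * (1 / real N)^(k+1))\<bar>
            \<le> CL * (S * (1 / real N)^(k+2) / fact (k+2))"
proof -
  define x0 where "x0 = node N (m - 1)"
  define h where "h = 1 / real N"
  have h: "h > 0" "h \<le> 1" using N by (auto simp: h_def)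
  define P where "P = (\<Sum>j<k+1. monom ((deriv ^^ j) v x0 / fact j * h ^ j) j)"
  define a1 where "a1 = (deriv ^^ (k+1)) v x0 / fact (k+1) * h^(k+1)"
  define R where "R s = v (loc N m s) - poly P s - a1 * s^(k+1)" for s
  have dP: "degree P \<le> k" unfolding P_def
    by (rule degree_sum_le) (auto intro: order_trans[OF degree_monom_le])
  have pP: "poly P s = (\<Sum>j<k+1. (deriv ^^ j) v x0 / fact j * (h * s) ^ j)" for s
    unfolding P_def poly_sum poly_monom by (simp add: power_mult_distrib mult.assoc)
  have Rb: "\<bar>R s\<bar> \<le> S * h^(k+2) / fact (k+2)" if s: "s \<in> {0..1}" for s
  proof -
    have hs: "h * s \<ge> 0" "h * s \<le> h" using h s by (auto simp: mult_left_le)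
    have T: "\<bar>v (x0 + h * s) - (\<Sum>j<k+2. (deriv ^^ j) v x0 / fact j * (h * s) ^ j)\<bar> \<le> S * (h * s) ^ (k+2) / fact (k+2)"
      by (rule taylor_bound) (use der bnd hs in auto)
    have "(\<Sum>j<k+2. (deriv ^^ j) v x0 / fact j * (h * s) ^ j) = poly P s + a1 * s^(k+1)"
      by (simp add: pP a1_def power_mult_distrib)
    moreover have "v (loc N m s) = v (x0 + h * s)" by (simp add: loc_eq x0_def h_def)
    moreover have "S * (h * s) ^ (k+2) / fact (k+2) \<le> S * h^(k+2) / fact (k+2)"
    proof -
      have S: "S \<ge> 0" using bnd by (meson abs_ge_zero order_trans)
      have "(h * s) ^ (k+2) \<le> h ^ (k+2)" using hs by (intro power_mono) auto
      then show ?thesis using S by (intro divide_right_mono mult_left_mono) auto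
    qed
    ultimately show ?thesis using T by (simp add: R_def)
  qed
  have cR: "continuous_on {0..1} R" unfolding R_def
    by (intro continuous_intros continuous_on_compose2[OF cv]) auto
  have c1: "continuous_on {0..1} (\<lambda>s. poly P s + a1 * s^(k+1))" by (intro continuous_intros)
  have c2: "continuous_on {0..1} (poly P)" "continuous_on {0..1} (\<lambda>s::real. s^(k+1))" by (intro continuous_intros)+
  have f_eq: "(\<lambda>s. v (loc N m s)) = (\<lambda>s. (poly P s + a1 * s^(k+1)) + 1 * R s)"
    by (simp add: R_def)
  have L1: "Lam k (\<lambda>s. v (loc N m s)) = Lam k (\<lambda>s. s^(k+1)) * a1 + Lam k R"
    unfolding f_eq Lam_lin(1)[OF k c1 cR] Lam_lin(1)[OF k c2] Lam_poly[OF k dP] by simp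
  have L2: "Lamr k (\<lambda>s. v (loc N m s)) = Lamr k (\<lambda>s. s^(k+1)) * a1 + Lamr k R"
    unfolding f_eq Lam_lin(2)[OF k c1 cR] Lam_lin(2)[OF k c2] Lam_poly[OF k dP] by simp
  have B: "\<bar>Lam k R\<bar> \<le> CL * (S * h^(k+2) / fact (k+2))" "\<bar>Lamr k R\<bar> \<le> CL * (S * h^(k+2) / fact (k+2))"
    using CL cR Rb by blast+
  show "\<bar>Lam k (\<lambda>s. v (loc N m s)) - Lam k (\<lambda>s. s^(k+1)) * ((deriv ^^ (k+1)) v (node N (m - 1)) / fact (k+1) * (1 / real N)^(k+1))\<bar>
            \<le> CL * (S * (1 / real N)^(k+2) / fact (k+2))"
    using L1 B(1) by (simp add: a1_def x0_def h_def)
  show "\<bar>Lamr k (\<lambda>s. v (loc N m s)) - Lamr k (\<lambda>s. s^(k+1)) * ((deriv ^^ (k+1)) v (node N (m - 1)) / fact (k+1) * (1 / real N)^(k+1))\<bar>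
            \<le> CL * (S * (1 / real N)^(k+2) / fact (k+2))"
    using L2 B(2) by (simp add: a1_def x0_def h_def)
qed


lemma int_diff_hk:
  fixes f g :: "real \<Rightarrow> real"
  shows "f integrable_on S \<Longrightarrow> g integrable_on S \<Longrightarrow> integral S (\<lambda>x. f x - g x) = integral S f - integral S g"
  by (rule integral_unique) (metis integrable_integral has_integral_diff)

lemma Lam_Aloc:
  assumes k: "k \<ge> 1" and cv: "continuous_on UNIV v"
  shows "Lam k (\<lambda>s. v (loc N m s)) = Aloc N k v m - (v (node N m) * pa k + v (node N (m - 1)) * pb k) / psi k 1"
        "Lamr k (\<lambda>s. v (loc N m s)) = Bloc N k v m - (v (node N m) * pb k + v (node N (m - 1)) * pa k) / psi k 1"
proof -
  let ?A = "v (node N m) / psi k 1" and ?B = "v (node N (m - 1)) / psi k 1"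
  have cf: "continuous_on {0..1} (\<lambda>s. v (loc N m s))"
    by (intro continuous_on_compose2[OF cv] continuous_intros) auto
  have i: "(\<lambda>s. v (loc N m s) * psi k s) integrable_on {0..1}" "(\<lambda>s. psi k s * psi k s) integrable_on {0..1}"
          "(\<lambda>s. psi k s * psi k (1 - s)) integrable_on {0..1}" "(\<lambda>s. v (loc N m s) * psi k (1 - s)) integrable_on {0..1}"
          "(\<lambda>s. psi k (1 - s) * psi k (1 - s)) integrable_on {0..1}"
    using cf by (auto intro!: integrable_continuous_interval continuous_intros)
  have ii: "(\<lambda>s. ?A * (psi k s * psi k s) + ?B * (psi k s * psi k (1 - s))) integrable_on {0..1}"
           "(\<lambda>s. ?A * (psi k s * psi k (1 - s)) + ?B * (psi k (1 - s) * psi k (1 - s))) integrable_on {0..1}"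
    using psi_1[OF k] by (auto intro!: integrable_continuous_interval continuous_intros)
  have "Lam k (\<lambda>s. v (loc N m s)) = integral {0..1} (\<lambda>s. v (loc N m s) * psi k s - (?A * (psi k s * psi k s) + ?B * (psi k s * psi k (1 - s))))"
    unfolding Lam_def loc_0 loc_1 by (rule integral_cong) (simp add: field_simps add_divide_distrib)
  also have "\<dots> = Aloc N k v m - (?A * pa k + ?B * pb k)"
    unfolding int_diff_hk[OF i(1) ii(1)] integral_lin2[OF i(2) i(3)] Aloc_def pa_def pb_def ..
  finally show "Lam k (\<lambda>s. v (loc N m s)) = Aloc N k v m - (v (node N m) * pa k + v (node N (m - 1)) * pb k) / psi k 1"
    by (simp add: add_divide_distrib)
  have "Lamr k (\<lambda>s. v (loc N m s)) = integral {0..1} (\<lambda>s. v (loc N m s) * psi k (1 - s) - (?A * (psi k s * psi k (1 - s)) + ?B * (psi k (1 - s) * psi k (1 - s))))"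
    unfolding Lamr_def loc_0 loc_1 by (rule integral_cong) (simp add: field_simps add_divide_distrib)
  also have "\<dots> = Bloc N k v m - (?A * pb k + ?B * pa k)"
    unfolding int_diff_hk[OF i(4) ii(2)] integral_lin2[OF i(3) i(5)] Bloc_def pa_r pb_def ..
  finally show "Lamr k (\<lambda>s. v (loc N m s)) = Bloc N k v m - (v (node N m) * pb k + v (node N (m - 1)) * pa k) / psi k 1"
    by (simp add: add_divide_distrib)
qed

lemma target_eq:
  assumes k: "k \<ge> 1" and N: "N \<ge> 1" and i: "i \<in> {1..N}"
    and cw: "continuous_on UNIV w" and cv: "continuous_on UNIV v"
  shows "integral {node N (int i - 1)..node N (int i)} (\<lambda>x. (w x - v x) * ell N k i x)
       = (Aloc N k w (int i) - Aloc N k v (int i)) / real N"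
proof -
  let ?a = "node N (int i - 1)" and ?b = "node N (int i)"
  let ?g = "\<lambda>x. (w x - v x) * psi k ((x - ?a) * real N)"
  have Np: "real N > 0" using N by simp
  have ab: "?b = ?a + 1 / real N" using N by (simp add: node_def field_simps)
  have "integral {?a..?b} (\<lambda>x. (w x - v x) * ell N k i x) = integral {?a..?b} ?g"
  proof (rule integral_spike[of "{?b}"])
    show "negligible {?b}" by simp
    fix x assume x: "x \<in> {?a..?b} - {?b}"
    then have t: "0 \<le> x - ?a" "x - ?a < 1 / real N" using ab by auto
    have "1 / real N \<le> 1" using N by simp
    then have fr: "frac (x - ?a) = x - ?a" using t by (simp add: frac_eq)
    have "(x - ?a) / (1 / real N) = (x - ?a) * real N" by simp
    then show "?g x = (w x - v x) * ell N k i x" unfolding ell_def Let_def fr using t by simp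
  qed
  also have "\<dots> = integral {0..1} (\<lambda>s. ?g (loc N (int i) s)) / real N"
    by (rule subst_elem[OF N]) (auto intro!: continuous_intros continuous_on_subset[OF cw] continuous_on_subset[OF cv])
  also have "integral {0..1} (\<lambda>s. ?g (loc N (int i) s)) = Aloc N k (\<lambda>x. w x - v x) (int i)"
    unfolding Aloc_def
  proof (rule integral_cong)
    fix s
    have "(loc N (int i) s - ?a) * real N = s" using N by (simp add: loc_eq)
    then show "?g (loc N (int i) s) = (w (loc N (int i) s) - v (loc N (int i) s)) * psi k s" by simp
  qed
  also have "\<dots> = Aloc N k w (int i) - Aloc N k v (int i)" by (rule Aloc_diff(1)[OF cw cv])
  finally show ?thesis .
qed


lemma tri3: "\<bar>A + B - C\<bar> \<le> \<bar>A\<bar> + \<bar>B\<bar> + \<bar>(C::real)\<bar>" by linarith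
lemma tri4: "\<bar>A - B + C + D\<bar> \<le> \<bar>A\<bar> + \<bar>B\<bar> + \<bar>C\<bar> + \<bar>(D::real)\<bar>" by linarith

lemma core_bound:
  fixes a b G E S h :: real and e Dd \<epsilon> \<epsilon>' :: "int \<Rightarrow> real"
  assumes N: "N \<ge> 1" and ab: "\<bar>b\<bar> < a" and ce: "cper N e" and cD: "cper N Dd"
    and H1: "\<And>j. 2 * a * e j + b * (e (j - 1) + e (j + 1)) = G * Dd (j - 1) + G * Dd j + \<epsilon> j + \<epsilon>' j"
    and Eb: "\<And>j. \<bar>\<epsilon> j\<bar> \<le> E" "\<And>j. \<bar>\<epsilon>' j\<bar> \<le> E"
    and H2: "\<And>j. \<bar>Dd j - Dd (j - 1)\<bar> \<le> S * h"
  shows "\<bar>a * e i + b * e (i - 1) - (G * Dd (i - 1) + \<epsilon> i)\<bar> \<le>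
     (a + \<bar>b\<bar>) * ((\<bar>G\<bar> * (S * h) + 2 * (\<bar>G\<bar> * \<bar>b\<bar> / (a + b)) * (S * h) + 2 * E) / (2 * (a - \<bar>b\<bar>)))
     + \<bar>G\<bar> * a / (a + b) * (S * h) + E"
proof -
  have apb: "a + b > 0" using ab by linarith
  define z where "z j = e j - G / (a + b) * Dd j" for j
  have cz: "cper N z" using ce cD unfolding cper_def z_def by simp
  define K where "K = \<bar>G\<bar> * (S * h) + 2 * (\<bar>G\<bar> * \<bar>b\<bar> / (a + b)) * (S * h) + 2 * E"
  have Kb: "\<bar>2 * a * z j + b * (z (j - 1) + z (j + 1))\<bar> \<le> K" for j
  proof -
    let ?d1 = "Dd (j - 1) - Dd j" and ?d2 = "Dd (j + 1) - Dd j"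
    have eq: "2 * a * z j + b * (z (j - 1) + z (j + 1)) = G * ?d1 - G * b / (a + b) * (?d1 + ?d2) + \<epsilon> j + \<epsilon>' j"
    proof -
      have "2 * a * z j + b * (z (j - 1) + z (j + 1)) = (2 * a * e j + b * (e (j - 1) + e (j + 1)))
         - G / (a + b) * (2 * a * Dd j + b * Dd (j - 1) + b * Dd (j + 1))"
        unfolding z_def by (simp add: algebra_simps)
      also have "\<dots> = G * Dd (j - 1) + G * Dd j + \<epsilon> j + \<epsilon>' j - G / (a + b) * (2 * a * Dd j + b * Dd (j - 1) + b * Dd (j + 1))"
        by (simp add: H1)
      also have "\<dots> = G * ?d1 - G * b / (a + b) * (?d1 + ?d2) + \<epsilon> j + \<epsilon>' j"
        using apb by (simp add: field_simps)
      finally show ?thesis .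
    qed
    have d1: "\<bar>?d1\<bar> \<le> S * h" using H2[of j] by simp
    have d2: "\<bar>?d2\<bar> \<le> S * h" using H2[of "j + 1"] by simp
    have t1: "\<bar>G * ?d1\<bar> \<le> \<bar>G\<bar> * (S * h)" using d1 by (simp add: abs_mult mult_left_mono)
    have "\<bar>?d1 + ?d2\<bar> \<le> 2 * (S * h)" using d1 d2 by linarith
    moreover have "\<bar>G * b / (a + b) * (?d1 + ?d2)\<bar> = (\<bar>G\<bar> * \<bar>b\<bar> / (a + b)) * \<bar>?d1 + ?d2\<bar>"
      using apb by (simp add: abs_mult abs_divide)
    moreover have "(\<bar>G\<bar> * \<bar>b\<bar> / (a + b)) \<ge> 0" using apb by simp
    ultimately have t2: "\<bar>G * b / (a + b) * (?d1 + ?d2)\<bar> \<le> (\<bar>G\<bar> * \<bar>b\<bar> / (a + b)) * (2 * (S * h))"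
      by (metis mult_left_mono)
    have T: "\<bar>2 * a * z j + b * (z (j - 1) + z (j + 1))\<bar> \<le> \<bar>G * ?d1\<bar> + \<bar>G * b / (a + b) * (?d1 + ?d2)\<bar> + \<bar>\<epsilon> j\<bar> + \<bar>\<epsilon>' j\<bar>"
      unfolding eq by (rule tri4)
    have R: "\<bar>G * ?d1\<bar> + \<bar>G * b / (a + b) * (?d1 + ?d2)\<bar> + \<bar>\<epsilon> j\<bar> + \<bar>\<epsilon>' j\<bar> \<le>
        \<bar>G\<bar> * (S * h) + (\<bar>G\<bar> * \<bar>b\<bar> / (a + b)) * (2 * (S * h)) + E + E"
      by (intro add_mono t1 t2 Eb)
    have "\<bar>G\<bar> * (S * h) + (\<bar>G\<bar> * \<bar>b\<bar> / (a + b)) * (2 * (S * h)) + E + E = K" unfolding K_def by simp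
    then show ?thesis using order_trans[OF T R] by simp
  qed
  have zb: "\<bar>z j\<bar> \<le> K / (2 * (a - \<bar>b\<bar>))" for j by (rule max_principle[OF N ab cz Kb])
  have eqQ: "a * e i + b * e (i - 1) - (G * Dd (i - 1) + \<epsilon> i) = a * z i + b * z (i - 1) + G * a / (a + b) * (Dd i - Dd (i - 1)) - \<epsilon> i"
  proof -
    have q1: "G / (a + b) * (a * Dd i + b * Dd (i - 1)) = G * Dd (i - 1) + G * a / (a + b) * (Dd i - Dd (i - 1))"
    proof -
      have nz: "a + b \<noteq> 0" using apb by simp
      show ?thesis using nz by (simp add: field_simps)
    qed
    have "a * z i + b * z (i - 1) = a * e i + b * e (i - 1) - G / (a + b) * (a * Dd i + b * Dd (i - 1))"
      unfolding z_def by (simp add: algebra_simps)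
    then show ?thesis using q1 by simp
  qed
  have "\<bar>a * z i + b * z (i - 1)\<bar> \<le> (a + \<bar>b\<bar>) * (K / (2 * (a - \<bar>b\<bar>)))"
  proof -
    have "\<bar>a * z i\<bar> \<le> a * (K / (2 * (a - \<bar>b\<bar>)))" using mult_left_mono[OF zb[of i], of a] ab by (simp add: abs_mult)
    moreover have "\<bar>b * z (i - 1)\<bar> \<le> \<bar>b\<bar> * (K / (2 * (a - \<bar>b\<bar>)))" using mult_left_mono[OF zb[of "i - 1"], of "\<bar>b\<bar>"] by (simp add: abs_mult)
    ultimately have "\<bar>a * z i\<bar> + \<bar>b * z (i - 1)\<bar> \<le> a * (K / (2 * (a - \<bar>b\<bar>))) + \<bar>b\<bar> * (K / (2 * (a - \<bar>b\<bar>)))"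
      by (rule add_mono)
    also have "\<dots> = (a + \<bar>b\<bar>) * (K / (2 * (a - \<bar>b\<bar>)))" by (rule distrib_right[symmetric])
    finally show ?thesis using abs_triangle_ineq[of "a * z i" "b * z (i - 1)"] by (rule order_trans[rotated])
  qed
  moreover have "\<bar>G * a / (a + b) * (Dd i - Dd (i - 1))\<bar> \<le> \<bar>G\<bar> * a / (a + b) * (S * h)"
  proof -
    have "\<bar>G * a / (a + b)\<bar> = \<bar>G\<bar> * a / (a + b)" using apb ab by (simp add: abs_mult abs_divide)
    then have "\<bar>G * a / (a + b) * (Dd i - Dd (i - 1))\<bar> = (\<bar>G\<bar> * a / (a + b)) * \<bar>Dd i - Dd (i - 1)\<bar>"
      by (simp only: abs_mult)
    moreover have "\<bar>G\<bar> * a / (a + b) \<ge> 0" using apb ab by simp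
    ultimately show ?thesis using mult_left_mono[OF H2[of i], of "\<bar>G\<bar> * a / (a + b)"] by simp
  qed
  moreover have "\<bar>a * z i + b * z (i - 1) + G * a / (a + b) * (Dd i - Dd (i - 1)) - \<epsilon> i\<bar> \<le>
      \<bar>a * z i + b * z (i - 1)\<bar> + \<bar>G * a / (a + b) * (Dd i - Dd (i - 1))\<bar> + \<bar>\<epsilon> i\<bar>" by (rule tri3)
  ultimately show ?thesis unfolding eqQ K_def using Eb(1)[of i] by linarith
qed


theorem lemma2p7:
  fixes \<kappa> k :: nat and v :: "real \<Rightarrow> real"
  assumes "k = 2 * \<kappa> + 1"
    and "Cp (k + 2) v"
  shows "\<exists>C>0. \<forall>N::nat. N \<ge> 1 \<longrightarrow>
    (\<forall>i\<in>{1..N}.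
      \<bar>integral {node N (int i - 1)..node N (int i)}
          (\<lambda>x. (pi1 N k v x - v x) * ell N k i x)\<bar>
      \<le> C * (1 / real N) ^ (k + 3) * supnorm ((deriv ^^ (k + 2)) v))"
proof -
  have k: "k \<ge> 1" and odd: "odd k" using assms(1) by auto
  note CF = Cp_facts[OF assms(2)]
  have der: "\<forall>j<k+2. \<forall>x. ((deriv ^^ j) v has_real_derivative (deriv ^^ Suc j) v x) (at x)" using CF(1) .
  have cv: "continuous_on UNIV v" using CF(3) .
  have pv: "\<And>x. v (x + 1) = v x" using CF(4)[of 0] by simp
  define S where "S = supnorm ((deriv ^^ (k + 2)) v)"
  have bnd: "\<forall>x. \<bar>(deriv ^^ (k+2)) v x\<bar> \<le> S"
    unfolding S_def using supnorm_bound[OF CF(2)] CF(4)[of "k+2"] by auto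
  have S0: "S \<ge> 0" using bnd by (meson abs_ge_zero order_trans)
  obtain CL where CL0: "CL > 0" and CL: "\<forall>(f::real\<Rightarrow>real) B. continuous_on {0..1} f \<longrightarrow> (\<forall>s\<in>{0..1}. \<bar>f s\<bar> \<le> B) \<longrightarrow>
            \<bar>Lam k f\<bar> \<le> CL * B \<and> \<bar>Lamr k f\<bar> \<le> CL * B"
    using Lam_bound[OF k] by blast
  define a where "a = pa k"
  define b where "b = pb k"
  have ab: "\<bar>b\<bar> < a" unfolding a_def b_def by (rule pa_pb[OF k])
  have apb: "a + b > 0" "a - \<bar>b\<bar> > 0" using ab by linarith+
  define lam where "lam = Lam k (\<lambda>s. s^(k+1))"
  have lsym: "Lamr k (\<lambda>s. s^(k+1)) = lam" unfolding lam_def by (rule Lam_sym[OF k odd])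
  define c1 where "c1 = \<bar>lam\<bar> / fact (k+1)"
  define c2 where "c2 = CL / fact (k+2)"
  have c1: "c1 \<ge> 0" and c2: "c2 > 0" using CL0 by (auto simp: c1_def c2_def)
  define C where "C = (a + \<bar>b\<bar>) * (c1 + 2 * c1 * \<bar>b\<bar> / (a + b) + 2 * c2) / (2 * (a - \<bar>b\<bar>)) + c1 * a / (a + b) + c2"
  have C0: "C > 0"
  proof -
    have "(a + \<bar>b\<bar>) * (c1 + 2 * c1 * \<bar>b\<bar> / (a + b) + 2 * c2) / (2 * (a - \<bar>b\<bar>)) \<ge> 0"
      using apb c1 c2 ab by (intro divide_nonneg_pos mult_nonneg_nonneg add_nonneg_nonneg) auto
    moreover have "c1 * a / (a + b) \<ge> 0" using apb c1 ab by simp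
    ultimately show ?thesis using c2 unfolding C_def by linarith
  qed
  have main: "\<bar>integral {node N (int i - 1)..node N (int i)} (\<lambda>x. (pi1 N k v x - v x) * ell N k i x)\<bar>
      \<le> C * (1 / real N) ^ (k + 3) * S" if N: "N \<ge> 1" and i: "i \<in> {1..N}" for N i
  proof -
    define h where "h = 1 / real N"
    have h: "h > 0" using N by (simp add: h_def)
    obtain c where cc: "cper N c" and sys: "\<And>j. 2 * pa k * c j + pb k * (c (j - 1) + c (j + 1)) = Aloc N k v j + Bloc N k v (j + 1)"
       and pic: "pi1 N k v = Sfun N k c"
      using pi1_Sfun[OF k N cv pv] by blast
    have cS: "continuous_on UNIV (Sfun N k c)" by (rule Sfun_cont[OF k N])
    have T: "integral {node N (int i - 1)..node N (int i)} (\<lambda>x. (pi1 N k v x - v x) * ell N k i x)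
        = (Aloc N k (Sfun N k c) (int i) - Aloc N k v (int i)) / real N"
      unfolding pic by (rule target_eq[OF k N i cS cv])
    have nodeN: "node N (j + int N) = node N j + 1" for j using N by (simp add: node_def field_simps)
    define ct where "ct j = v (node N j) / psi k 1" for j
    define e where "e j = c j - ct j" for j
    define Dd where "Dd j = (deriv ^^ (k+1)) v (node N j)" for j
    have ce: "cper N e" using cc pv unfolding cper_def e_def ct_def by (simp add: nodeN)
    have cD: "cper N Dd" using CF(4)[of "k+1"] unfolding cper_def Dd_def by (simp add: nodeN)
    define G where "G = lam / fact (k+1) * h^(k+1)"
    define E where "E = CL * (S * h^(k+2) / fact (k+2))"
    define \<epsilon> where "\<epsilon> m = Lam k (\<lambda>s. v (loc N m s)) - G * Dd (m - 1)" for m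
    define \<epsilon>' where "\<epsilon>' j = Lamr k (\<lambda>s. v (loc N (j + 1) s)) - G * Dd j" for j
    note LE = local_exp[OF k N der bnd cv CL]
    have GD: "G * Dd m = lam * ((deriv ^^ (k+1)) v (node N m) / fact (k+1) * (1 / real N)^(k+1))" for m
      unfolding G_def Dd_def h_def by (simp only: times_divide_eq_right times_divide_eq_left mult_ac)
    have Eb1: "\<bar>\<epsilon> m\<bar> \<le> E" for m
    proof -
      have "\<epsilon> m = Lam k (\<lambda>s. v (loc N m s)) - Lam k (\<lambda>s. s^(k+1)) * ((deriv ^^ (k+1)) v (node N (m - 1)) / fact (k+1) * (1 / real N)^(k+1))"
        unfolding \<epsilon>_def GD lam_def ..
      then show ?thesis using LE(1)[of m] unfolding E_def h_def by simp
    qed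
    have Eb2: "\<bar>\<epsilon>' j\<bar> \<le> E" for j
    proof -
      have "\<epsilon>' j = Lamr k (\<lambda>s. v (loc N (j + 1) s)) - Lamr k (\<lambda>s. s^(k+1)) * ((deriv ^^ (k+1)) v (node N (j + 1 - 1)) / fact (k+1) * (1 / real N)^(k+1))"
        unfolding \<epsilon>'_def GD lsym by simp
      then show ?thesis using LE(2)[of "j + 1"] unfolding E_def h_def by simp
    qed
    have LA: "Aloc N k v m = Lam k (\<lambda>s. v (loc N m s)) + a * ct m + b * ct (m - 1)"
             "Bloc N k v m = Lamr k (\<lambda>s. v (loc N m s)) + b * ct m + a * ct (m - 1)" for m
      using Lam_Aloc[OF k cv, of N m] psi_1[OF k] unfolding ct_def a_def b_def by (simp_all add: field_simps)
    have H1: "2 * a * e j + b * (e (j - 1) + e (j + 1)) = G * Dd (j - 1) + G * Dd j + \<epsilon> j + \<epsilon>' j" for j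
    proof -
      have "2 * a * c j + b * (c (j - 1) + c (j + 1)) = Aloc N k v j + Bloc N k v (j + 1)"
        using sys[of j] unfolding a_def b_def .
      then have "2 * a * c j + b * (c (j - 1) + c (j + 1)) = Lam k (\<lambda>s. v (loc N j s)) + a * ct j + b * ct (j - 1)
          + (Lamr k (\<lambda>s. v (loc N (j + 1) s)) + b * ct (j + 1) + a * ct j)"
        unfolding LA by simp
      then show ?thesis unfolding e_def \<epsilon>_def \<epsilon>'_def by (simp add: algebra_simps)
    qed
    have H2: "\<bar>Dd j - Dd (j - 1)\<bar> \<le> S * h" for j
    proof -
      let ?g = "(deriv ^^ (k+1)) v"
      have "(?g has_real_derivative (deriv ^^ Suc (k+1)) v x) (at x)" for x
        using der[rule_format, of "k+1" x] by simp
      then have d1: "\<forall>jj<1. \<forall>x. ((deriv ^^ jj) ?g has_real_derivative (deriv ^^ Suc jj) ?g x) (at x)"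
        by simp
      have b1: "\<forall>x. \<bar>(deriv ^^ 1) ?g x\<bar> \<le> S" using bnd by simp
      have "\<bar>?g (node N (j - 1) + h) - (\<Sum>jj<1. (deriv ^^ jj) ?g (node N (j - 1)) / fact jj * h ^ jj)\<bar> \<le> S * h ^ 1 / fact 1"
        by (rule taylor_bound[OF _ d1 b1]) (use h in auto)
      moreover have "node N (j - 1) + h = node N j" using N by (simp add: node_def h_def field_simps)
      ultimately show ?thesis unfolding Dd_def by simp
    qed
    have A1: "Aloc N k (Sfun N k c) (int i) = a * c (int i) + b * c (int i - 1)"
      using Aloc_Sfun(1)[OF k N, of c "int i"] unfolding a_def b_def by (simp only: mult.commute)
    have Q: "Aloc N k (Sfun N k c) (int i) - Aloc N k v (int i) = a * e (int i) + b * e (int i - 1) - (G * Dd (int i - 1) + \<epsilon> (int i))"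
      unfolding A1 LA(1)[of "int i"] e_def \<epsilon>_def by (simp add: algebra_simps)
    have CB: "\<bar>a * e (int i) + b * e (int i - 1) - (G * Dd (int i - 1) + \<epsilon> (int i))\<bar> \<le>
     (a + \<bar>b\<bar>) * ((\<bar>G\<bar> * (S * h) + 2 * (\<bar>G\<bar> * \<bar>b\<bar> / (a + b)) * (S * h) + 2 * E) / (2 * (a - \<bar>b\<bar>)))
     + \<bar>G\<bar> * a / (a + b) * (S * h) + E"
      by (rule core_bound[OF N ab ce cD H1 Eb1 Eb2 H2])
    have aG: "\<bar>G\<bar> = c1 * h^(k+1)" unfolding G_def c1_def using h by (simp add: abs_mult)
    have hh: "h^(k+1) * h = h^(k+2)" by simp
    have RHS: "((a + \<bar>b\<bar>) * ((\<bar>G\<bar> * (S * h) + 2 * (\<bar>G\<bar> * \<bar>b\<bar> / (a + b)) * (S * h) + 2 * E) / (2 * (a - \<bar>b\<bar>)))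
     + \<bar>G\<bar> * a / (a + b) * (S * h) + E) = S * h^(k+2) * C"
    proof -
      have e1: "\<bar>G\<bar> * (S * h) = c1 * (S * h^(k+2))" unfolding aG hh[symmetric] by (simp add: algebra_simps)
      have e2: "E = c2 * (S * h^(k+2))" unfolding E_def c2_def by (simp add: algebra_simps)
      have e3: "2 * (\<bar>G\<bar> * \<bar>b\<bar> / (a + b)) * (S * h) = 2 * c1 * \<bar>b\<bar> / (a + b) * (S * h^(k+2))"
      proof -
        have "2 * (\<bar>G\<bar> * \<bar>b\<bar> / (a + b)) * (S * h) = (2 * \<bar>b\<bar> / (a + b)) * (\<bar>G\<bar> * (S * h))"
          by (simp add: divide_inverse mult_ac)
        also have "\<dots> = (2 * \<bar>b\<bar> / (a + b)) * (c1 * (S * h^(k+2)))" by (simp only: e1)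
        also have "\<dots> = 2 * c1 * \<bar>b\<bar> / (a + b) * (S * h^(k+2))" by (simp add: divide_inverse mult_ac)
        finally show ?thesis .
      qed
      have e4: "\<bar>G\<bar> * a / (a + b) * (S * h) = c1 * a / (a + b) * (S * h^(k+2))"
      proof -
        have "\<bar>G\<bar> * a / (a + b) * (S * h) = (a / (a + b)) * (\<bar>G\<bar> * (S * h))"
          by (simp add: divide_inverse mult_ac)
        also have "\<dots> = (a / (a + b)) * (c1 * (S * h^(k+2)))" by (simp only: e1)
        also have "\<dots> = c1 * a / (a + b) * (S * h^(k+2))" by (simp add: divide_inverse mult_ac)
        finally show ?thesis .
      qed
      show ?thesis unfolding e1 e2 e3 e4 C_def using apb by (simp add: field_simps)
    qed
    have "\<bar>integral {node N (int i - 1)..node N (int i)} (\<lambda>x. (pi1 N k v x - v x) * ell N k i x)\<bar>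
        = \<bar>a * e (int i) + b * e (int i - 1) - (G * Dd (int i - 1) + \<epsilon> (int i))\<bar> * h"
      unfolding T Q h_def by (simp add: abs_divide)
    also have "\<dots> \<le> S * h^(k+2) * C * h"
    proof (rule mult_right_mono)
      show "\<bar>a * e (int i) + b * e (int i - 1) - (G * Dd (int i - 1) + \<epsilon> (int i))\<bar> \<le> S * h^(k+2) * C"
        using CB unfolding RHS .
    qed (use h in simp)
    also have "\<dots> = C * h ^ (k + 3) * S"
    proof -
      have k3: "k + 3 = Suc (k + 2)" by simp
      have "h ^ (k + 3) = h ^ (k + 2) * h" by (simp only: k3 power_Suc2)
      then show ?thesis by (simp only: mult_ac)
    qed
    also have "\<dots> = C * (1 / real N) ^ (k + 3) * S" unfolding h_def ..
    finally show ?thesis .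
  qed
  show ?thesis unfolding S_def[symmetric] using C0 main by blast
qed


end
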